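(* Suppose that $A\in\widetilde{\mathcal{M}''_0}[\tau_{s^*}]$ and $\mathcal{M}''_0\mathcal{D}\subset\mathcal{D}$. Then the following are equivalent: (i) $A\in\widetilde{\mathcal{M}''_0}[\tau_{s^*}]_{cq+}$; (ii) $(I+A)^{-1}\in\mathcal{U}(\mathcal{M}''_0)_+$; (iii) $\overline{A}$ is a positive self-adjoint operator.
   Context: Let $\mathcal{D}$ be a dense subspace of a Hilbert space $\mathcal{H}$, $I$ the identity. $\mathcal{L}^\dagger(\mathcal{D},\mathcal{H})$ is the space of linear $X:\mathcal{D}\to\mathcal{H}$ with $\mathcal{D}(X^* )\supseteq\mathcal{D}$, involution $X^\dagger=X^*\lceil\mathcal{D}$. $\mathcal{M}_0$ is a unital $C^*$-algebra of bounded operators on $\mathcal{H}$ with $\mathcal{M}_0\mathcal{D}\subset\mathcal{D}$; $\mathcal{M}''_0$ is its bicommutant (a von Neumann algebra), elements identified with restrictions to $\mathcal{D}$. $\tau_{s^*}$: topology of seminorms $X\mapsto\sum_{\xi\in F}(\|X\xi\|+\|X^\dagger\xi\|)$, $F\subset\mathcal{D}$ finite. $\widetilde{\mathcal{M}''_0}[\tau_{s^*}]$ is realized as the set of $\tau_{s^*}$-limits in $\mathcal{L}^\dagger(\mathcal{D},\mathcal{H})$ of nets in $\mathcal{M}''_0$; products with elements $X$ of $\mathcal{M}''_0$ are limits of $X_\alpha X$, $XX_\alpha$. $\widetilde{\mathcal{M}''_0}[\tau_{s^*}]_{cq+}$ is the set of $\tau_{s^*}$-limits of nets of mutually commuting positive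 elements of $\mathcal{M}''_0$. $\mathcal{U}(\mathcal{M}''_0)_+=\{X\in\mathcal{M}''_0:X\ge0,\|X\|\le1\}$; "$(I+A)^{-1}\in\mathcal{U}(\mathcal{M}''_0)_+$" means there is $Y\in\mathcal{U}(\mathcal{M}''_0)_+$ with $(I+A)Y=Y(I+A)=I$. *)

theory Defs
  imports "HOL-Analysis.Analysis"
begin

class cplx_vector = real_vector +
  fixes scaleC :: "complex \<Rightarrow> 'a \<Rightarrow> 'a"  (infixr \<open>*\<^sub>C\<close> 75)
  assumes scaleC_add_right: "c *\<^sub>C (x + y) = c *\<^sub>C x + c *\<^sub>C y"
    and scaleC_add_left: "(c + d) *\<^sub>C x = c *\<^sub>C x + d *\<^sub>C x"
    and scaleC_scaleC: "c *\<^sub>C (d *\<^sub>C x) = (c * d) *\<^sub>C x"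
    and scaleC_one: "1 *\<^sub>C x = x"
    and scaleR_scaleC: "scaleR r x = (complex_of_real r) *\<^sub>C x"

class cplx_inner = cplx_vector + real_normed_vector +
  fixes cinner :: "'a \<Rightarrow> 'a \<Rightarrow> complex"
  assumes cinner_commute: "cinner x y = cnj (cinner y x)"
    and cinner_add_left: "cinner (x + y) z = cinner x z + cinner y z"
    and cinner_scaleC_left: "cinner (c *\<^sub>C x) y = cnj c * cinner x y"
    and cinner_ge_zero: "0 \<le> Re (cinner x x)"
    and cinner_eq_zero_iff: "cinner x x = 0 \<longleftrightarrow> x = 0"
    and norm_eq_sqrt_cinner: "norm x = sqrt (Re (cinner x x))"

class cplx_hilbert = cplx_inner + complete_space

definition csubspace :: "'h::cplx_vector set \<Rightarrow> bool" where
  "csubspace S \<longleftrightarrow> 0 \<in> S \<and> (\<forall>x\<in>S. \<forall>y\<in>S. x + y \<in> S) \<and> (\<forall>c. \<forall>x\<in>S. c *\<^sub>C x \<in> S)"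

definition dense_subspace :: "'h::cplx_hilbert set \<Rightarrow> bool" where
  "dense_subspace D \<longleftrightarrow> csubspace D \<and> closure D = UNIV"

definition clinear_on :: "'h::cplx_vector set \<Rightarrow> ('h \<Rightarrow> 'h) \<Rightarrow> bool" where
  "clinear_on D X \<longleftrightarrow> (\<forall>x\<in>D. \<forall>y\<in>D. X (x + y) = X x + X y) \<and> (\<forall>c. \<forall>x\<in>D. X (c *\<^sub>C x) = c *\<^sub>C X x)"

definition adj_dom :: "'h::cplx_hilbert set \<Rightarrow> ('h \<Rightarrow> 'h) \<Rightarrow> 'h set" where
  "adj_dom D X = {\<eta>. \<exists>\<zeta>. \<forall>\<xi>\<in>D. cinner (X \<xi>) \<eta> = cinner \<xi> \<zeta>}"

text \<open>The adjoint X* (meaningful on adj_dom D X, D dense); X-dagger is its restriction to D.\<close>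
definition adj :: "'h::cplx_hilbert set \<Rightarrow> ('h \<Rightarrow> 'h) \<Rightarrow> 'h \<Rightarrow> 'h" where
  "adj D X \<eta> = (THE \<zeta>. \<forall>\<xi>\<in>D. cinner (X \<xi>) \<eta> = cinner \<xi> \<zeta>)"

text \<open>L-dagger(D,H): linear maps D -> H whose adjoint domain contains D.
  Only values on D matter.\<close>
definition Ldag :: "'h::cplx_hilbert set \<Rightarrow> ('h \<Rightarrow> 'h) set" where
  "Ldag D = {X. clinear_on D X \<and> D \<subseteq> adj_dom D X}"

definition bounded_clinear_op :: "('h::cplx_hilbert \<Rightarrow> 'h) \<Rightarrow> bool" where
  "bounded_clinear_op T \<longleftrightarrow> clinear_on UNIV T \<and> (\<exists>K. \<forall>x. norm (T x) \<le> norm x * K)"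

definition positive_op :: "('h::cplx_hilbert \<Rightarrow> 'h) \<Rightarrow> bool" where
  "positive_op T \<longleftrightarrow> (\<forall>x. Im (cinner x (T x)) = 0 \<and> 0 \<le> Re (cinner x (T x)))"

definition unital_cstar_algebra :: "('h::cplx_hilbert \<Rightarrow> 'h) set \<Rightarrow> bool" where
  "unital_cstar_algebra M \<longleftrightarrow>
     (\<forall>T\<in>M. bounded_clinear_op T) \<and> id \<in> M \<and>
     (\<forall>S\<in>M. \<forall>T\<in>M. (\<lambda>x. S x + T x) \<in> M \<and> S \<circ> T \<in> M) \<and>
     (\<forall>c. \<forall>T\<in>M. (\<lambda>x. c *\<^sub>C T x) \<in> M) \<and>
     (\<forall>T\<in>M. adj UNIV T \<in> M) \<and>
     (\<forall>T. bounded_clinear_op T \<and> (\<forall>e>0. \<exists>S\<in>M. onorm (\<lambda>x. T x - S x) < e) \<longrightarrow> T \<in> M)"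

definition commutant :: "('h::cplx_hilbert \<Rightarrow> 'h) set \<Rightarrow> ('h \<Rightarrow> 'h) set" where
  "commutant M = {S. bounded_clinear_op S \<and> (\<forall>T\<in>M. S \<circ> T = T \<circ> S)}"

definition bicommutant :: "('h::cplx_hilbert \<Rightarrow> 'h) set \<Rightarrow> ('h \<Rightarrow> 'h) set" where
  "bicommutant M = commutant (commutant M)"

text \<open>A is the tau_{s*}-limit in L-dagger(D,H) of a net with values in S:
  the net is the filter F (proper, eventually in S); convergence in tau_{s*}
  means X xi -> A xi and X-dagger xi -> A-dagger xi for every xi in D.\<close>
definition tau_s_star_limit_of :: "'h::cplx_hilbert set \<Rightarrow> ('h \<Rightarrow> 'h) set \<Rightarrow> ('h \<Rightarrow> 'h) \<Rightarrow> bool" where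
  "tau_s_star_limit_of D S A \<longleftrightarrow> A \<in> Ldag D \<and>
     (\<exists>F :: ('h \<Rightarrow> 'h) filter. F \<noteq> bot \<and> eventually (\<lambda>X. X \<in> S) F \<and>
        (\<forall>\<xi>\<in>D. ((\<lambda>X. X \<xi>) \<longlongrightarrow> A \<xi>) F \<and> ((\<lambda>X. adj D X \<xi>) \<longlongrightarrow> adj D A \<xi>) F))"

definition tau_closure :: "'h::cplx_hilbert set \<Rightarrow> ('h \<Rightarrow> 'h) set \<Rightarrow> ('h \<Rightarrow> 'h) set" where
  "tau_closure D M = {A. tau_s_star_limit_of D M A}"

definition tau_closure_cq_pos :: "'h::cplx_hilbert set \<Rightarrow> ('h \<Rightarrow> 'h) set \<Rightarrow> ('h \<Rightarrow> 'h) set" where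
  "tau_closure_cq_pos D M = {A. \<exists>S. S \<subseteq> M \<and> (\<forall>X\<in>S. positive_op X) \<and>
        (\<forall>X\<in>S. \<forall>Y\<in>S. X \<circ> Y = Y \<circ> X) \<and> tau_s_star_limit_of D S A}"

definition unit_ball_pos :: "('h::cplx_hilbert \<Rightarrow> 'h) set \<Rightarrow> ('h \<Rightarrow> 'h) set" where
  "unit_ball_pos M = {X\<in>M. positive_op X \<and> onorm X \<le> 1}"

definition op_closure_graph :: "'h::cplx_hilbert set \<Rightarrow> ('h \<Rightarrow> 'h) \<Rightarrow> ('h \<times> 'h) set" where
  "op_closure_graph D A = closure {(\<xi>, A \<xi>) | \<xi>. \<xi> \<in> D}"

definition is_graph :: "('h \<times> 'h) set \<Rightarrow> bool" where
  "is_graph G \<longleftrightarrow> (\<forall>x y z. (x, y) \<in> G \<and> (x, z) \<in> G \<longrightarrow> y = z)"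

definition graph_adjoint :: "('h::cplx_hilbert \<times> 'h) set \<Rightarrow> ('h \<times> 'h) set" where
  "graph_adjoint G = {(\<eta>, \<zeta>). \<forall>(\<xi>, x)\<in>G. cinner x \<eta> = cinner \<xi> \<zeta>}"

definition positive_selfadjoint_graph :: "('h::cplx_hilbert \<times> 'h) set \<Rightarrow> bool" where
  "positive_selfadjoint_graph G \<longleftrightarrow> is_graph G \<and> closure (Domain G) = UNIV \<and>
     graph_adjoint G = G \<and> (\<forall>(\<xi>, x)\<in>G. Im (cinner \<xi> x) = 0 \<and> 0 \<le> Re (cinner \<xi> x))"

end

theory Submission
  imports Defs
begin


lemma scaleC_zero_left[simp]: "(0::complex) *\<^sub>C (x::'a::cplx_vector) = 0"
  using scaleR_scaleC[of 0 x] by simp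

lemma scaleC_zero_right[simp]: "c *\<^sub>C (0::'a::cplx_vector) = 0"
proof -
  have "c *\<^sub>C (0::'a) = c *\<^sub>C (0 + 0)" by simp
  also have "\<dots> = c *\<^sub>C 0 + c *\<^sub>C 0" by (rule scaleC_add_right)
  finally show ?thesis by simp
qed

lemma scaleC_minus_one: "(-1::complex) *\<^sub>C (x::'a::cplx_vector) = - x"
  using scaleR_scaleC[of "-1" x] by simp

lemma scaleC_minus_right: "c *\<^sub>C (- x::'a::cplx_vector) = - (c *\<^sub>C x)"
proof -
  have "c *\<^sub>C x + c *\<^sub>C (-x) = 0" using scaleC_add_right[of c x "-x"] by simp
  then show ?thesis using neg_eq_iff_add_eq_0[of "c *\<^sub>C x" "c *\<^sub>C (-x)"] by simp
qed

lemma scaleC_diff_right: "c *\<^sub>C (x - y::'a::cplx_vector) = c *\<^sub>C x - c *\<^sub>C y"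
  using scaleC_add_right[of c x "-y"] by (simp add: scaleC_minus_right)

lemma scaleC_minus_left: "(- c) *\<^sub>C (x::'a::cplx_vector) = - (c *\<^sub>C x)"
proof -
  have "(- c) *\<^sub>C x = (-1 * c) *\<^sub>C x" by simp
  also have "\<dots> = (-1) *\<^sub>C (c *\<^sub>C x)" by (simp only: scaleC_scaleC)
  finally show ?thesis by (simp add: scaleC_minus_one)
qed

lemma scaleC_diff_left: "(c - d) *\<^sub>C (x::'a::cplx_vector) = c *\<^sub>C x - d *\<^sub>C x"
  using scaleC_add_left[of c "-d" x] by (simp add: scaleC_minus_left)

lemma cinner_add_right: "cinner x (y + z) = cinner x y + cinner (x::'a::cplx_inner) z"
proof -
  have "cinner x (y+z) = cnj (cinner (y+z) x)" by (rule cinner_commute)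
  also have "\<dots> = cnj (cinner y x) + cnj (cinner z x)" by (simp add: cinner_add_left)
  also have "\<dots> = cinner x y + cinner x z" by (simp add: cinner_commute[of x y, symmetric] cinner_commute[of x z, symmetric])
  finally show ?thesis .
qed

lemma cinner_scaleC_right: "cinner x (c *\<^sub>C y) = c * cinner (x::'a::cplx_inner) y"
proof -
  have "cinner x (c *\<^sub>C y) = cnj (cinner (c *\<^sub>C y) x)" by (rule cinner_commute)
  also have "\<dots> = c * cnj (cinner y x)" by (simp add: cinner_scaleC_left)
  also have "\<dots> = c * cinner x y" by (simp add: cinner_commute[of x y, symmetric])
  finally show ?thesis .
qed

lemma cinner_zero_left[simp]: "cinner 0 (x::'a::cplx_inner) = 0"
proof -
  have "cinner 0 x = cinner (0+0) x" by simp
  also have "\<dots> = cinner 0 x + cinner 0 x" by (rule cinner_add_left)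
  finally show ?thesis by simp
qed

lemma cinner_zero_right[simp]: "cinner (x::'a::cplx_inner) 0 = 0"
proof -
  have "cinner x 0 = cinner x (0+0)" by simp
  also have "\<dots> = cinner x 0 + cinner x 0" by (rule cinner_add_right)
  finally show ?thesis by simp
qed

lemma cinner_minus_left: "cinner (- x) (y::'a::cplx_inner) = - cinner x y"
proof -
  have "cinner x y + cinner (-x) y = 0" using cinner_add_left[of x "-x" y] by simp
  then show ?thesis using neg_eq_iff_add_eq_0[of "cinner x y" "cinner (-x) y"] by simp
qed

lemma cinner_minus_right: "cinner x (- y::'a::cplx_inner) = - cinner x y"
proof -
  have "cinner x y + cinner x (-y) = 0" using cinner_add_right[of x y "-y"] by simp
  then show ?thesis using neg_eq_iff_add_eq_0[of "cinner x y" "cinner x (-y)"] by simp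
qed

lemma cinner_diff_left: "cinner (x - y) (z::'a::cplx_inner) = cinner x z - cinner y z"
  using cinner_add_left[of x "-y" z] by (simp add: cinner_minus_left)

lemma cinner_diff_right: "cinner x (y - z::'a::cplx_inner) = cinner x y - cinner x z"
  using cinner_add_right[of x y "-z"] by (simp add: cinner_minus_right)

lemma cinner_scaleR_left: "cinner (r *\<^sub>R x) (y::'a::cplx_inner) = of_real r * cinner x y"
  by (simp add: scaleR_scaleC cinner_scaleC_left)

lemma cinner_scaleR_right: "cinner x (r *\<^sub>R y::'a::cplx_inner) = of_real r * cinner x y"
  by (simp add: scaleR_scaleC cinner_scaleC_right)

lemma cinner_self_Im: "Im (cinner x (x::'a::cplx_inner)) = 0"
proof -
  have "Im (cinner x x) = Im (cnj (cinner x x))" using cinner_commute[of x x] by simp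
  then show ?thesis by simp
qed

lemma cinner_self: "cinner x (x::'a::cplx_inner) = complex_of_real ((norm x)\<^sup>2)"
proof -
  have "Re (cinner x x) = (norm x)\<^sup>2" using norm_eq_sqrt_cinner[of x] cinner_ge_zero[of x] by simp
  then show ?thesis using cinner_self_Im[of x] by (simp add: complex_eq_iff)
qed

lemma norm_scaleC: "norm (c *\<^sub>C (x::'a::cplx_inner)) = cmod c * norm x"
proof -
  have "cinner (c *\<^sub>C x) (c *\<^sub>C x) = (cnj c * c) * cinner x x"
    by (simp add: cinner_scaleC_left cinner_scaleC_right mult.assoc)
  also have "cnj c * c = complex_of_real ((cmod c)\<^sup>2)"
    by (subst mult.commute) (rule complex_norm_square[symmetric])
  finally have "complex_of_real ((norm (c *\<^sub>C x))\<^sup>2) = complex_of_real ((cmod c)\<^sup>2) * complex_of_real ((norm x)\<^sup>2)"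
    unfolding cinner_self .
  also have "\<dots> = complex_of_real ((cmod c * norm x)\<^sup>2)"
    by (simp only: of_real_mult[symmetric] power_mult_distrib)
  finally have "(norm (c *\<^sub>C x))\<^sup>2 = (cmod c * norm x)\<^sup>2"
    by (simp only: of_real_eq_iff)
  then show ?thesis by (simp add: power2_eq_iff_nonneg)
qed

lemma norm_sq_add: "(norm (x + y::'a::cplx_inner))\<^sup>2 = (norm x)\<^sup>2 + 2 * Re (cinner x y) + (norm y)\<^sup>2"
proof -
  have "complex_of_real ((norm (x+y))\<^sup>2) = cinner (x+y) (x+y)" by (rule cinner_self[symmetric])
  also have "\<dots> = cinner x x + cinner x y + cinner y x + cinner y y"
    by (simp add: cinner_add_left cinner_add_right)
  finally have e: "complex_of_real ((norm (x+y))\<^sup>2) = cinner x x + cinner x y + cinner y x + cinner y y" .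
  have "(norm (x+y))\<^sup>2 = Re (cinner x x + cinner x y + cinner y x + cinner y y)"
    using arg_cong[OF e, of Re] by simp
  moreover have "Re (cinner y x) = Re (cinner x y)" using cinner_commute[of y x] by simp
  ultimately show ?thesis by (simp add: cinner_self)
qed

lemma norm_sq_diff: "(norm (x - y::'a::cplx_inner))\<^sup>2 = (norm x)\<^sup>2 - 2 * Re (cinner x y) + (norm y)\<^sup>2"
  using norm_sq_add[of x "-y"] by (simp add: cinner_minus_right)

lemma gen_cs:
  fixes B :: "'a::cplx_vector \<Rightarrow> 'a \<Rightarrow> complex"
  assumes add_l: "\<And>x y z. B (x+y) z = B x z + B y z"
    and sc_l: "\<And>c x y. B (c *\<^sub>C x) y = cnj c * B x y"
    and herm: "\<And>x y. B x y = cnj (B y x)"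
    and pos: "\<And>x. 0 \<le> Re (B x x)"
  shows "(cmod (B x y))\<^sup>2 \<le> Re (B x x) * Re (B y y)"
proof -
  have add_r: "B x (y + z) = B x y + B x z" for x y z
  proof -
    have "B x (y + z) = cnj (B (y+z) x)" by (rule herm)
    also have "\<dots> = cnj (B y x) + cnj (B z x)" by (simp add: add_l)
    also have "\<dots> = B x y + B x z" by (simp add: herm[of x y] herm[of x z])
    finally show ?thesis .
  qed
  have sc_r: "B x (c *\<^sub>C y) = c * B x y" for x y c
  proof -
    have "B x (c *\<^sub>C y) = cnj (B (c *\<^sub>C y) x)" by (rule herm)
    also have "\<dots> = c * cnj (B y x)" by (simp add: sc_l)
    also have "\<dots> = c * B x y" by (simp add: herm[of x y])
    finally show ?thesis .
  qed
  define b where "b = B x y"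
  have byx: "B y x = cnj b" by (simp add: b_def herm[of y x])
  have exp: "Re (B (x + \<mu> *\<^sub>C y) (x + \<mu> *\<^sub>C y)) = Re (B x x) + 2 * Re (\<mu> * b) + (cmod \<mu>)\<^sup>2 * Re (B y y)" for \<mu>
  proof -
    have "B (x + \<mu> *\<^sub>C y) (x + \<mu> *\<^sub>C y) = B x x + \<mu> * b + cnj \<mu> * cnj b + cnj \<mu> * \<mu> * B y y"
      by (simp add: add_l add_r sc_l sc_r b_def byx algebra_simps)
    moreover have "cnj \<mu> * \<mu> = complex_of_real ((cmod \<mu>)\<^sup>2)"
      by (subst mult.commute) (rule complex_norm_square[symmetric])
    moreover have "Re (cnj \<mu> * cnj b) = Re (\<mu> * b)"
      by (simp only: complex_cnj_mult[symmetric]) simp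
    ultimately show ?thesis by simp
  qed
  have key: "0 \<le> Re (B x x) - 2 * t * (cmod b)\<^sup>2 + t\<^sup>2 * (cmod b)\<^sup>2 * Re (B y y)" for t :: real
  proof -
    define \<mu> where "\<mu> = - complex_of_real t * cnj b"
    have bb: "b * cnj b = complex_of_real ((cmod b)\<^sup>2)" by (rule complex_norm_square[symmetric])
    have "\<mu> * b = - complex_of_real t * (b * cnj b)" by (simp add: \<mu>_def algebra_simps)
    then have "\<mu> * b = - complex_of_real (t * (cmod b)\<^sup>2)" by (simp only: bb of_real_mult) simp
    then have r1: "Re (\<mu> * b) = - t * (cmod b)\<^sup>2" by simp
    have r2: "(cmod \<mu>)\<^sup>2 = t\<^sup>2 * (cmod b)\<^sup>2"
      by (simp add: \<mu>_def norm_mult power_mult_distrib)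
    show ?thesis using pos[of "x + \<mu> *\<^sub>C y"] exp[of \<mu>] r1 r2 by (simp add: algebra_simps)
  qed
  show ?thesis
  proof (cases "Re (B y y) = 0")
    case True
    show ?thesis
    proof (cases "b = 0")
      case True then show ?thesis using pos[of x] pos[of y] by (simp add: b_def)
    next
      case False
      then have bp: "(cmod b)\<^sup>2 > 0" by simp
      define t where "t = (Re (B x x) + 1) / (2 * (cmod b)\<^sup>2)"
      have "2 * t * (cmod b)\<^sup>2 = Re (B x x) + 1" using bp by (simp add: t_def)
      then show ?thesis using key[of t] True by simp
    qed
  next
    case False
    then have yp: "Re (B y y) > 0" using pos[of y] by simp
    define t where "t = 1 / Re (B y y)"
    have "0 \<le> Re (B x x) - 2 * t * (cmod b)\<^sup>2 + t\<^sup>2 * (cmod b)\<^sup>2 * Re (B y y)" by (rule key)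
    also have "t\<^sup>2 * (cmod b)\<^sup>2 * Re (B y y) = t * (cmod b)\<^sup>2" using yp by (simp add: t_def power2_eq_square)
    finally have "t * (cmod b)\<^sup>2 \<le> Re (B x x)" by simp
    then have "(cmod b)\<^sup>2 / Re (B y y) \<le> Re (B x x)" by (simp add: t_def)
    then have "(cmod b)\<^sup>2 \<le> Re (B x x) * Re (B y y)" using yp by (simp add: pos_divide_le_eq)
    then show ?thesis by (simp add: b_def)
  qed
qed

lemma cauchy_schwarz: "cmod (cinner x (y::'a::cplx_inner)) \<le> norm x * norm y"
proof -
  have "(cmod (cinner x y))\<^sup>2 \<le> Re (cinner x x) * Re (cinner y y)"
    by (rule gen_cs[of cinner]) (rule cinner_add_left cinner_scaleC_left cinner_commute cinner_ge_zero)+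
  also have "\<dots> = (norm x * norm y)\<^sup>2" by (simp add: cinner_self power_mult_distrib)
  finally show ?thesis by (rule power2_le_imp_le) simp
qed



section \<open>Bounded operators\<close>

lemma bco_add: "bounded_clinear_op T \<Longrightarrow> T (x + y) = T x + T y"
  by (simp add: bounded_clinear_op_def clinear_on_def)

lemma bco_scaleC: "bounded_clinear_op T \<Longrightarrow> T (c *\<^sub>C x) = c *\<^sub>C T x"
  by (simp add: bounded_clinear_op_def clinear_on_def)

lemma bco_zero: "bounded_clinear_op (T::'a::cplx_hilbert \<Rightarrow> 'a) \<Longrightarrow> T 0 = 0"
  using bco_scaleC[of T 0 0] by simp

lemma bco_minus: "bounded_clinear_op (T::'a::cplx_hilbert \<Rightarrow> 'a) \<Longrightarrow> T (- x) = - T x"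
  using bco_scaleC[of T "-1" x] by (simp add: scaleC_minus_one)

lemma bco_diff: "bounded_clinear_op (T::'a::cplx_hilbert \<Rightarrow> 'a) \<Longrightarrow> T (x - y) = T x - T y"
  using bco_add[of T x "-y"] by (simp add: bco_minus)

lemma bco_scaleR: "bounded_clinear_op (T::'a::cplx_hilbert \<Rightarrow> 'a) \<Longrightarrow> T (r *\<^sub>R x) = r *\<^sub>R T x"
  by (simp add: scaleR_scaleC bco_scaleC)

lemma bco_bounded_linear: "bounded_clinear_op (T::'a::cplx_hilbert \<Rightarrow> 'a) \<Longrightarrow> bounded_linear T"
proof -
  assume a: "bounded_clinear_op T"
  then obtain K where K: "\<forall>x. norm (T x) \<le> norm x * K" by (auto simp: bounded_clinear_op_def)
  show ?thesis by (rule bounded_linear_intro[where K=K]) (use a K bco_add bco_scaleR in auto)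
qed

lemma bco_tendsto: "bounded_clinear_op (T::'a::cplx_hilbert \<Rightarrow> 'a) \<Longrightarrow> (f \<longlongrightarrow> a) F \<Longrightarrow> ((\<lambda>x. T (f x)) \<longlongrightarrow> T a) F"
  using bounded_linear.tendsto[OF bco_bounded_linear] by blast

lemma bco_continuous: "bounded_clinear_op (T::'a::cplx_hilbert \<Rightarrow> 'a) \<Longrightarrow> continuous_on UNIV T"
  using bounded_linear.continuous_on[OF bco_bounded_linear, of T UNIV "\<lambda>x. x"] by (simp add: continuous_on_id)

lemma bco_intro:
  assumes "\<And>x y. T (x + y) = T x + T y" "\<And>c x. T (c *\<^sub>C x) = c *\<^sub>C T x" "\<And>x. norm (T x) \<le> norm x * K"
  shows "bounded_clinear_op T"
  using assms unfolding bounded_clinear_op_def clinear_on_def by blast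

lemma bco_id: "bounded_clinear_op (id::'a::cplx_hilbert \<Rightarrow> 'a)"
  by (rule bco_intro[where K=1]) auto

lemma bco_bound:
  assumes "bounded_clinear_op T"
  obtains K where "K \<ge> 0" "\<And>x. norm (T x) \<le> norm x * K"
proof -
  obtain K where K: "\<forall>x. norm (T x) \<le> norm x * K" using assms by (auto simp: bounded_clinear_op_def)
  have "norm (T x) \<le> norm x * max K 0" for x
    using K[rule_format, of x] mult_left_mono[of K "max K 0" "norm x"] by simp
  then show ?thesis using that[of "max K 0"] by simp
qed

lemma bco_comp: "bounded_clinear_op (S::'a::cplx_hilbert \<Rightarrow> 'a) \<Longrightarrow> bounded_clinear_op T \<Longrightarrow> bounded_clinear_op (S \<circ> T)"
proof -
  assume s: "bounded_clinear_op S" and t: "bounded_clinear_op T"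
  obtain K where K: "K \<ge> 0" "\<And>x. norm (S x) \<le> norm x * K" using s bco_bound by blast
  obtain L where L: "L \<ge> 0" "\<And>x. norm (T x) \<le> norm x * L" using t bco_bound by blast
  have "norm ((S \<circ> T) x) \<le> norm x * (L * K)" for x
  proof -
    have "norm (S (T x)) \<le> norm (T x) * K" using K by blast
    also have "\<dots> \<le> (norm x * L) * K" using L K by (simp add: mult_right_mono)
    finally show ?thesis by (simp add: mult.assoc)
  qed
  then show ?thesis using s t by (intro bco_intro[where K="L*K"]) (auto simp: bco_add bco_scaleC)
qed

lemma bco_plus: "bounded_clinear_op (S::'a::cplx_hilbert \<Rightarrow> 'a) \<Longrightarrow> bounded_clinear_op T \<Longrightarrow> bounded_clinear_op (\<lambda>x. S x + T x)"
proof -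
  assume s: "bounded_clinear_op S" and t: "bounded_clinear_op T"
  obtain K where K: "K \<ge> 0" "\<And>x. norm (S x) \<le> norm x * K" using s bco_bound by blast
  obtain L where L: "L \<ge> 0" "\<And>x. norm (T x) \<le> norm x * L" using t bco_bound by blast
  have "norm (S x + T x) \<le> norm x * (K + L)" for x
    using norm_triangle_ineq[of "S x" "T x"] K(2)[of x] L(2)[of x] by (simp add: algebra_simps)
  then show ?thesis using s t by (intro bco_intro[where K="K+L"]) (auto simp: bco_add bco_scaleC scaleC_add_right)
qed

lemma bco_scal: "bounded_clinear_op (T::'a::cplx_hilbert \<Rightarrow> 'a) \<Longrightarrow> bounded_clinear_op (\<lambda>x. c *\<^sub>C T x)"
proof -
  assume t: "bounded_clinear_op T"
  obtain L where L: "L \<ge> 0" "\<And>x. norm (T x) \<le> norm x * L" using t bco_bound by blast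
  have "norm (c *\<^sub>C T x) \<le> norm x * (cmod c * L)" for x
    using L(2)[of x] mult_left_mono[of "norm (T x)" "norm x * L" "cmod c"] by (simp add: norm_scaleC algebra_simps)
  then show ?thesis using t by (intro bco_intro[where K="cmod c * L"]) (auto simp: bco_add bco_scaleC scaleC_add_right scaleC_scaleC mult.commute)
qed

lemma bounded_bilinear_cinner: "bounded_bilinear (cinner :: 'a::cplx_inner \<Rightarrow> 'a \<Rightarrow> complex)"
proof
  show "cinner (a + a') b = cinner a b + cinner a' b" for a a' b :: 'a by (rule cinner_add_left)
  show "cinner a (b + b') = cinner a b + cinner a b'" for a b b' :: 'a by (rule cinner_add_right)
  show "cinner (r *\<^sub>R a) b = r *\<^sub>R cinner a b" for r and a b :: 'a by (simp add: cinner_scaleR_left scaleR_conv_of_real)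
  show "cinner a (r *\<^sub>R b) = r *\<^sub>R cinner a b" for r and a b :: 'a by (simp add: cinner_scaleR_right scaleR_conv_of_real)
  show "\<exists>K. \<forall>a b::'a. norm (cinner a b) \<le> norm a * norm b * K"
    by (rule exI[of _ 1]) (simp add: cauchy_schwarz)
qed

lemma tendsto_cinner: "(f \<longlongrightarrow> (a::'a::cplx_inner)) F \<Longrightarrow> (g \<longlongrightarrow> b) F \<Longrightarrow> ((\<lambda>x. cinner (f x) (g x)) \<longlongrightarrow> cinner a b) F"
  by (rule bounded_bilinear.tendsto[OF bounded_bilinear_cinner])

lemma pos_herm:
  assumes T: "bounded_clinear_op (T::'a::cplx_hilbert \<Rightarrow> 'a)" and P: "positive_op T"
  shows "cinner (T x) y = cinner x (T y)"
proof -
  define Q where "Q u v = cinner u (T v)" for u v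
  have im: "Im (Q u u) = 0" for u using P by (simp add: positive_op_def Q_def)
  have e1: "Q (x+y) (x+y) = Q x x + Q x y + Q y x + Q y y"
    by (simp add: Q_def bco_add[OF T] cinner_add_left cinner_add_right)
  have e2: "Q (x + \<i> *\<^sub>C y) (x + \<i> *\<^sub>C y) = Q x x + \<i> * Q x y - \<i> * Q y x + Q y y"
    by (simp add: Q_def bco_add[OF T] bco_scaleC[OF T] cinner_add_left cinner_add_right cinner_scaleC_left cinner_scaleC_right algebra_simps)
  have a: "Im (Q x y) + Im (Q y x) = 0" using im[of "x+y"] im[of x] im[of y] e1 by simp
  have b: "Re (Q x y) - Re (Q y x) = 0" using im[of "x + \<i> *\<^sub>C y"] im[of x] im[of y] e2 by simp
  have "cnj (Q y x) = Q x y" using a b by (simp add: complex_eq_iff)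
  then show ?thesis by (simp add: Q_def cinner_commute[of "T x" y])
qed



section \<open>Dense subspaces and the adjoint\<close>

lemma dense_orth:
  assumes D: "dense_subspace (D::'a::cplx_hilbert set)" and o: "\<And>\<xi>. \<xi> \<in> D \<Longrightarrow> cinner \<xi> u = 0"
  shows "u = 0"
proof -
  have "u \<in> closure D" using D by (simp add: dense_subspace_def)
  then obtain x where x: "\<And>n. x n \<in> D" "x \<longlonglongrightarrow> u" by (auto simp: closure_sequential)
  have "(\<lambda>n. cinner (x n) u) \<longlonglongrightarrow> cinner u u" by (rule tendsto_cinner[OF x(2) tendsto_const])
  moreover have "(\<lambda>n. cinner (x n) u) = (\<lambda>n. 0)" using o x(1) by auto
  ultimately have "cinner u u = 0" using LIMSEQ_unique by (metis tendsto_const)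
  then show ?thesis by (simp add: cinner_eq_zero_iff)
qed

lemma dense_eq:
  assumes D: "dense_subspace (D::'a::cplx_hilbert set)" and o: "\<And>\<xi>. \<xi> \<in> D \<Longrightarrow> cinner \<xi> u = cinner \<xi> v"
  shows "u = v"
proof -
  have "u - v = 0" by (rule dense_orth[OF D]) (simp add: cinner_diff_right o)
  then show ?thesis by simp
qed

lemma dense_UNIV: "dense_subspace (UNIV::'a::cplx_hilbert set)"
  by (simp add: dense_subspace_def csubspace_def)

lemma adj_eqI:
  assumes D: "dense_subspace (D::'a::cplx_hilbert set)" and h: "\<forall>\<xi>\<in>D. cinner (X \<xi>) \<eta> = cinner \<xi> \<zeta>"
  shows "adj D X \<eta> = \<zeta>"
  unfolding adj_def
proof (rule the_equality)
  show "\<forall>\<xi>\<in>D. cinner (X \<xi>) \<eta> = cinner \<xi> \<zeta>" by (rule h)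
  show "z = \<zeta>" if "\<forall>\<xi>\<in>D. cinner (X \<xi>) \<eta> = cinner \<xi> z" for z
    using dense_eq[OF D, of z \<zeta>] that h by simp
qed

lemma adj_prop:
  assumes D: "dense_subspace (D::'a::cplx_hilbert set)" and e: "\<eta> \<in> adj_dom D X" and x: "\<xi> \<in> D"
  shows "cinner (X \<xi>) \<eta> = cinner \<xi> (adj D X \<eta>)"
proof -
  obtain \<zeta> where z: "\<forall>\<xi>\<in>D. cinner (X \<xi>) \<eta> = cinner \<xi> \<zeta>" using e by (auto simp: adj_dom_def)
  then show ?thesis using adj_eqI[OF D z] x by simp
qed

lemma inner_ext: "(\<And>x. cinner x a = cinner x (b::'a::cplx_hilbert)) \<Longrightarrow> a = b"
  using dense_eq[OF dense_UNIV] by blast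

lemma csub_add: "csubspace K \<Longrightarrow> x \<in> K \<Longrightarrow> y \<in> K \<Longrightarrow> x + y \<in> K"
  by (simp add: csubspace_def)
lemma csub_scaleC: "csubspace K \<Longrightarrow> x \<in> K \<Longrightarrow> c *\<^sub>C x \<in> K"
  by (simp add: csubspace_def)
lemma csub_zero: "csubspace K \<Longrightarrow> 0 \<in> K"
  by (simp add: csubspace_def)
lemma csub_minus: "csubspace (K::'a::cplx_vector set) \<Longrightarrow> x \<in> K \<Longrightarrow> - x \<in> K"
  using csub_scaleC[of K x "-1"] by (simp add: scaleC_minus_one)
lemma csub_diff: "csubspace (K::'a::cplx_vector set) \<Longrightarrow> x \<in> K \<Longrightarrow> y \<in> K \<Longrightarrow> x - y \<in> K"
  using csub_add[of K x "-y"] csub_minus[of K y] by simp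
lemma csub_scaleR: "csubspace (K::'a::cplx_vector set) \<Longrightarrow> x \<in> K \<Longrightarrow> r *\<^sub>R x \<in> K"
  by (simp add: scaleR_scaleC csub_scaleC)

lemma parallelogram: "(norm (a - b::'a::cplx_inner))\<^sup>2 + (norm (a + b))\<^sup>2 = 2 * (norm a)\<^sup>2 + 2 * (norm b)\<^sup>2"
  by (simp add: norm_sq_add norm_sq_diff)

section \<open>Projection theorem\<close>

lemma projection:
  fixes K :: "'a::cplx_hilbert set"
  assumes S: "csubspace K" and C: "closed K"
  shows "\<exists>p\<in>K. \<forall>k\<in>K. cinner k (x - p) = 0"
proof -
  define f where "f k = (norm (x - k))\<^sup>2" for k
  define d where "d = Inf (f ` K)"
  have ne: "f ` K \<noteq> {}" using csub_zero[OF S] by blast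
  have bdd: "bdd_below (f ` K)" by (rule bdd_belowI[of _ 0]) (auto simp: f_def)
  have d_le: "d \<le> f k" if "k \<in> K" for k using cInf_lower[OF _ bdd] that by (simp add: d_def)
  have "\<exists>k. k \<in> K \<and> f k < d + inverse (real (Suc n))" for n
  proof -
    have "Inf (f ` K) < d + inverse (real (Suc n))" by (simp add: d_def)
    then show ?thesis using cInf_less_iff[OF ne bdd] by auto
  qed
  then obtain k where k: "\<And>n. k n \<in> K" "\<And>n. f (k n) < d + inverse (real (Suc n))"
    using choice[of "\<lambda>n k. k \<in> K \<and> f k < d + inverse (real (Suc n))"] by blast
  have pl: "(norm (k n - k m))\<^sup>2 \<le> 2 * inverse (real (Suc n)) + 2 * inverse (real (Suc m))" for n m
  proof -
    define mid where "mid = (1/2::real) *\<^sub>R (k n + k m)"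
    have midK: "mid \<in> K" unfolding mid_def by (intro csub_scaleR[OF S] csub_add[OF S] k)
    have e1: "(x - k m) - (x - k n) = k n - k m" by simp
    have e2: "(x - k m) + (x - k n) = 2 *\<^sub>R (x - mid)"
      by (simp add: mid_def scaleR_right_diff_distrib scaleR_right_distrib scaleR_2)
    have "(norm (k n - k m))\<^sup>2 + (norm (2 *\<^sub>R (x - mid)))\<^sup>2 = 2 * f (k m) + 2 * f (k n)"
      using parallelogram[of "x - k m" "x - k n"] unfolding e1 e2 f_def .
    moreover have "(norm (2 *\<^sub>R (x - mid)))\<^sup>2 = 4 * f mid" by (simp add: f_def power_mult_distrib)
    moreover have "d \<le> f mid" using d_le midK by blast
    ultimately show ?thesis using k(2)[of n] k(2)[of m] by simp
  qed
  have "Cauchy k"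
  proof (rule metric_CauchyI)
    fix e :: real assume e: "e > 0"
    obtain N :: nat where N: "4 / e\<^sup>2 < real N" using reals_Archimedean2 by blast
    have NP: "real N > 0" using N e by (smt (verit) divide_pos_pos zero_less_power)
    have "dist (k m) (k n) < e" if "m \<ge> N" "n \<ge> N" for m n
    proof -
      have i1: "inverse (real (Suc m)) \<le> inverse (real N)" using that NP by (simp add: le_imp_inverse_le)
      have i2: "inverse (real (Suc n)) \<le> inverse (real N)" using that NP by (simp add: le_imp_inverse_le)
      have "4 * inverse (real N) < e\<^sup>2" using N NP e by (simp add: field_simps)
      then have "(norm (k m - k n))\<^sup>2 < e\<^sup>2" using pl[of m n] i1 i2 by linarith
      then have "norm (k m - k n) < e" using e by (simp add: power_less_imp_less_base)
      then show ?thesis by (simp add: dist_norm)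
    qed
    then show "\<exists>M. \<forall>m\<ge>M. \<forall>n\<ge>M. dist (k m) (k n) < e" by blast
  qed
  then obtain p where p: "k \<longlonglongrightarrow> p" using Cauchy_convergent_iff convergent_def by blast
  have pK: "p \<in> K" using C k(1) p closed_sequential_limits by blast
  have fp: "f p \<le> d"
  proof (rule tendsto_le[OF trivial_limit_sequentially])
    show "(\<lambda>n. f (k n)) \<longlonglongrightarrow> f p" unfolding f_def by (intro tendsto_intros p)
    show "(\<lambda>n. d + inverse (real (Suc n))) \<longlonglongrightarrow> d"
      using tendsto_add[OF tendsto_const LIMSEQ_inverse_real_of_nat, of d] by simp
    show "\<forall>\<^sub>F n in sequentially. f (k n) \<le> d + inverse (real (Suc n))"
      using k(2) by (simp add: less_imp_le)
  qed
  have "cinner k' (x - p) = 0" if kK: "k' \<in> K" for k'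
  proof (rule ccontr)
    assume ne0: "cinner k' (x - p) \<noteq> 0"
    define w where "w = x - p"
    define a where "a = cinner w k'"
    have a0: "a \<noteq> 0" using ne0 cinner_commute[of k' w] by (auto simp: a_def w_def)
    define A where "A = (cmod a)\<^sup>2"
    define N where "N = (norm k')\<^sup>2"
    define s where "s = 1 / (N + 1)"
    have A0: "A > 0" using a0 by (simp add: A_def)
    have N0: "N \<ge> 0" by (simp add: N_def)
    have s0: "s > 0" using N0 by (simp add: s_def)
    have sN: "s * N < 1" using N0 by (simp add: s_def field_simps)
    define t where "t = complex_of_real s * cnj a"
    have "p + t *\<^sub>C k' \<in> K" by (intro csub_add[OF S] csub_scaleC[OF S] pK kK)
    then have "f p \<le> f (p + t *\<^sub>C k')" using fp d_le by fastforce
    moreover have "x - (p + t *\<^sub>C k') = w - t *\<^sub>C k'" by (simp add: w_def)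
    ultimately have "(norm w)\<^sup>2 \<le> (norm (w - t *\<^sub>C k'))\<^sup>2" by (simp add: f_def w_def)
    also have "\<dots> = (norm w)\<^sup>2 - 2 * Re (t * a) + (cmod t * norm k')\<^sup>2"
      by (simp add: norm_sq_diff cinner_scaleC_right norm_scaleC a_def)
    also have "t * a = complex_of_real (s * A)"
    proof -
      have "cnj a * a = complex_of_real A" unfolding A_def by (subst mult.commute) (rule complex_norm_square[symmetric])
      then show ?thesis by (simp add: t_def mult.assoc)
    qed
    also have "(cmod t * norm k')\<^sup>2 = s\<^sup>2 * A * N"
      using s0 by (simp add: t_def norm_mult A_def N_def power_mult_distrib)
    finally have ineq: "0 \<le> - 2 * (s * A) + s\<^sup>2 * A * N" by simp
    have "s\<^sup>2 * A * N = (s * A) * (s * N)" by (simp add: power2_eq_square)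
    also have "\<dots> < (s * A) * 1" using sN s0 A0 by (intro mult_strict_left_mono) auto
    finally show False using ineq s0 A0 by (smt (verit) mult_pos_pos)
  qed
  then show ?thesis using pK by blast
qed

lemma orth_closed_UNIV:
  fixes K :: "'a::cplx_hilbert set"
  assumes S: "csubspace K" and C: "closed K" and o: "\<And>u. (\<forall>k\<in>K. cinner k u = 0) \<Longrightarrow> u = 0"
  shows "K = UNIV"
proof -
  have "x \<in> K" for x
  proof -
    obtain p where "p \<in> K" "\<forall>k\<in>K. cinner k (x - p) = 0" using projection[OF S C] by blast
    then show ?thesis using o[of "x - p"] by simp
  qed
  then show ?thesis by blast
qed



section \<open>Riesz representation and bounded adjoints\<close>

lemma riesz:
  fixes f :: "'a::cplx_hilbert \<Rightarrow> complex"
  assumes add: "\<And>x y. f (x + y) = f x + f y" and sc: "\<And>c x. f (c *\<^sub>C x) = c * f x"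
    and bd: "\<And>x. cmod (f x) \<le> norm x * B"
  shows "\<exists>z. \<forall>x. f x = cinner z x"
proof -
  have bl: "bounded_linear f"
    by (rule bounded_linear_intro[where K=B]) (use add bd in \<open>auto simp: scaleR_scaleC sc scaleR_conv_of_real\<close>)
  have f0: "f 0 = 0" using sc[of 0 0] by simp
  define K where "K = {x. f x = 0}"
  have KS: "csubspace K" unfolding K_def csubspace_def using f0 add sc by auto
  have KC: "closed K" unfolding K_def
    by (rule closed_Collect_eq) (auto intro: linear_continuous_on bl continuous_on_const)
  show ?thesis
  proof (cases "\<forall>x. f x = 0")
    case True then show ?thesis by (intro exI[of _ 0]) simp
  next
    case False
    then obtain x0 where x0: "f x0 \<noteq> 0" by blast
    obtain p where pK: "p \<in> K" and po: "\<forall>k\<in>K. cinner k (x0 - p) = 0" using projection[OF KS KC] by blast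
    define u where "u = x0 - p"
    have fdiff: "f (a - b) = f a - f b" for a b
      using add[of a "-b"] sc[of "-1" b] by (simp add: scaleC_minus_one)
    have fu: "f u = f x0" using pK by (simp add: u_def fdiff K_def)
    have u0: "u \<noteq> 0" using fu x0 f0 by auto
    have uo: "cinner u k = 0" if "k \<in> K" for k
      using po that cinner_commute[of u k] by (simp add: u_def)
    have cuu: "cinner u u \<noteq> 0" using u0 by (simp add: cinner_eq_zero_iff)
    define z where "z = cnj (f u / cinner u u) *\<^sub>C u"
    have "f x = cinner z x" for x
    proof -
      define v where "v = x - (f x / f u) *\<^sub>C u"
      have "f v = 0" using x0 fu by (simp add: v_def fdiff sc)
      then have "cinner u v = 0" using uo by (simp add: K_def)
      then have "cinner u x = (f x / f u) * cinner u u" by (simp add: v_def cinner_diff_right cinner_scaleC_right)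
      then show ?thesis using cuu x0 fu by (simp add: z_def cinner_scaleC_left field_simps)
    qed
    then show ?thesis by blast
  qed
qed

lemma bco_adj_exists:
  assumes T: "bounded_clinear_op (T::'a::cplx_hilbert \<Rightarrow> 'a)"
  shows "\<exists>z. \<forall>x. cinner (T x) y = cinner x z"
proof -
  obtain K where K: "K \<ge> 0" "\<And>x. norm (T x) \<le> norm x * K" using T bco_bound by blast
  have bd: "cmod (cinner y (T x)) \<le> norm x * (norm y * K)" for x
  proof -
    have "cmod (cinner y (T x)) \<le> norm y * norm (T x)" by (rule cauchy_schwarz)
    also have "\<dots> \<le> norm y * (norm x * K)" using K by (simp add: mult_left_mono)
    finally show ?thesis by (simp add: algebra_simps)
  qed
  obtain z where z: "\<forall>x. cinner y (T x) = cinner z x"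
    using riesz[of "\<lambda>x. cinner y (T x)", OF _ _ bd]
    by (auto simp: bco_add[OF T] bco_scaleC[OF T] cinner_add_right cinner_scaleC_right)
  have "cinner (T x) y = cinner x z" for x
    using z cinner_commute[of "T x" y] cinner_commute[of x z] by simp
  then show ?thesis by blast
qed

lemma adj_UNIV:
  assumes T: "bounded_clinear_op (T::'a::cplx_hilbert \<Rightarrow> 'a)"
  shows "cinner (T x) y = cinner x (adj UNIV T y)"
proof -
  obtain z where z: "\<forall>x. cinner (T x) y = cinner x z" using bco_adj_exists[OF T] by blast
  have "adj UNIV T y = z" by (rule adj_eqI[OF dense_UNIV]) (use z in simp)
  then show ?thesis using z by simp
qed

lemma adj_UNIV_left:
  assumes T: "bounded_clinear_op (T::'a::cplx_hilbert \<Rightarrow> 'a)"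
  shows "cinner (adj UNIV T y) x = cinner y (T x)"
  using adj_UNIV[OF T, of x y] cinner_commute[of "T x" y] cinner_commute[of x "adj UNIV T y"] by simp

lemma adj_restrict:
  assumes D: "dense_subspace D" and T: "bounded_clinear_op (T::'a::cplx_hilbert \<Rightarrow> 'a)"
  shows "adj D T \<eta> = adj UNIV T \<eta>"
  by (rule adj_eqI[OF D]) (simp add: adj_UNIV[OF T])

lemma adj_herm:
  assumes D: "dense_subspace D" and T: "bounded_clinear_op (T::'a::cplx_hilbert \<Rightarrow> 'a)"
    and H: "\<And>x y. cinner (T x) y = cinner x (T y)"
  shows "adj D T \<eta> = T \<eta>"
  by (rule adj_eqI[OF D]) (simp add: H)

lemma adj_bco:
  assumes T: "bounded_clinear_op (T::'a::cplx_hilbert \<Rightarrow> 'a)"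
  shows "bounded_clinear_op (adj UNIV T)"
proof -
  let ?A = "adj UNIV T"
  obtain K where K: "K \<ge> 0" "\<And>x. norm (T x) \<le> norm x * K" using T bco_bound by blast
  have a1: "?A (y1 + y2) = ?A y1 + ?A y2" for y1 y2
    by (rule inner_ext) (simp add: adj_UNIV[OF T, symmetric] cinner_add_right)
  have a2: "?A (c *\<^sub>C y) = c *\<^sub>C ?A y" for c y
    by (rule inner_ext) (simp add: adj_UNIV[OF T, symmetric] cinner_scaleC_right)
  have a3: "norm (?A y) \<le> norm y * K" for y
  proof -
    have "(norm (?A y))\<^sup>2 = Re (cinner (?A y) (?A y))" by (simp add: cinner_self)
    also have "\<dots> = Re (cinner (T (?A y)) y)" by (simp add: adj_UNIV[OF T])
    also have "\<dots> \<le> cmod (cinner (T (?A y)) y)" by (rule complex_Re_le_cmod)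
    also have "\<dots> \<le> norm (T (?A y)) * norm y" by (rule cauchy_schwarz)
    also have "\<dots> \<le> (norm (?A y) * K) * norm y" using K by (simp add: mult_right_mono)
    finally have h: "(norm (?A y))\<^sup>2 \<le> norm (?A y) * (norm y * K)" by (simp add: algebra_simps)
    show ?thesis
    proof (cases "norm (?A y) = 0")
      case True then show ?thesis using K by simp
    next
      case False
      then have "norm (?A y) > 0" by simp
      then show ?thesis using h by (simp add: power2_eq_square)
    qed
  qed
  show ?thesis by (rule bco_intro[where K=K]) (use a1 a2 a3 in auto)
qed



section \<open>Commutants\<close>

lemma comm_bco: "X \<in> commutant N \<Longrightarrow> bounded_clinear_op X"
  by (simp add: commutant_def)

lemma comm_apply: "X \<in> commutant N \<Longrightarrow> T \<in> N \<Longrightarrow> X (T x) = T (X x)"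
  unfolding commutant_def by (auto dest!: fun_cong[where x=x])

lemma commI: "bounded_clinear_op X \<Longrightarrow> (\<And>T x. T \<in> N \<Longrightarrow> X (T x) = T (X x)) \<Longrightarrow> X \<in> commutant N"
  unfolding commutant_def by (auto simp: fun_eq_iff)

lemma comm_id: "(id::'a::cplx_hilbert \<Rightarrow> 'a) \<in> commutant N"
  by (rule commI) (auto simp: bco_id)

lemma comm_bounded_ops:
  "T \<in> commutant N \<Longrightarrow> bounded_clinear_op T" by (rule comm_bco)

lemma comm_plus: "S \<in> commutant N \<Longrightarrow> T \<in> commutant N \<Longrightarrow> (\<forall>U\<in>N. bounded_clinear_op U) \<Longrightarrow> (\<lambda>x. S x + T x) \<in> commutant (N::('a::cplx_hilbert \<Rightarrow> 'a) set)"
  by (rule commI) (auto simp: bco_plus comm_bco comm_apply bco_add)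

lemma comm_comp: "S \<in> commutant N \<Longrightarrow> T \<in> commutant N \<Longrightarrow> S \<circ> T \<in> commutant (N::('a::cplx_hilbert \<Rightarrow> 'a) set)"
  by (rule commI) (auto simp: bco_comp comm_bco comm_apply)

lemma comm_scal: "T \<in> commutant N \<Longrightarrow> (\<forall>U\<in>N. bounded_clinear_op U) \<Longrightarrow> (\<lambda>x. c *\<^sub>C T x) \<in> commutant (N::('a::cplx_hilbert \<Rightarrow> 'a) set)"
  by (rule commI) (auto simp: bco_scal comm_bco comm_apply bco_scaleC)

lemma comm_adj:
  assumes NB: "\<forall>U\<in>N. bounded_clinear_op U" and NA: "\<forall>U\<in>N. adj UNIV U \<in> N"
    and S: "S \<in> commutant (N::('a::cplx_hilbert \<Rightarrow> 'a) set)"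
  shows "adj UNIV S \<in> commutant N"
proof (rule commI)
  have SB: "bounded_clinear_op S" using S by (rule comm_bco)
  show "bounded_clinear_op (adj UNIV S)" by (rule adj_bco[OF SB])
  fix T y assume T: "T \<in> N"
  have TB: "bounded_clinear_op T" using NB T by blast
  have TA: "adj UNIV T \<in> N" using NA T by blast
  show "adj UNIV S (T y) = T (adj UNIV S y)"
  proof (rule inner_ext)
    fix x
    have "cinner x (adj UNIV S (T y)) = cinner (S x) (T y)" by (simp add: adj_UNIV[OF SB])
    also have "\<dots> = cinner (adj UNIV T (S x)) y" by (simp add: adj_UNIV_left[OF TB])
    also have "\<dots> = cinner (S (adj UNIV T x)) y" using comm_apply[OF S TA] by simp
    also have "\<dots> = cinner (adj UNIV T x) (adj UNIV S y)" by (simp add: adj_UNIV[OF SB])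
    also have "\<dots> = cinner x (T (adj UNIV S y))" by (simp add: adj_UNIV_left[OF TB])
    finally show "cinner x (adj UNIV S (T y)) = cinner x (T (adj UNIV S y))" .
  qed
qed

lemma comm_all_bco: "\<forall>U\<in>commutant N. bounded_clinear_op U"
  by (simp add: comm_bco)

lemma comm_all_adj:
  assumes NB: "\<forall>U\<in>N. bounded_clinear_op U" and NA: "\<forall>U\<in>N. adj UNIV U \<in> N"
  shows "\<forall>S\<in>commutant (N::('a::cplx_hilbert \<Rightarrow> 'a) set). adj UNIV S \<in> commutant N"
  using comm_adj[OF NB NA] by blast

lemma gadj_memI: "(\<And>\<xi> x. (\<xi>, x) \<in> G \<Longrightarrow> cinner x \<eta> = cinner \<xi> \<zeta>) \<Longrightarrow> (\<eta>, \<zeta>) \<in> graph_adjoint G"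
  by (auto simp: graph_adjoint_def)

lemma gadj_memD: "(\<eta>, \<zeta>) \<in> graph_adjoint G \<Longrightarrow> (\<xi>, x) \<in> G \<Longrightarrow> cinner x \<eta> = cinner \<xi> \<zeta>"
  by (auto simp: graph_adjoint_def)

lemma seq_pair_tendsto:
  assumes "(\<lambda>n. (a n, b n)) \<longlonglongrightarrow> (p, q)"
  shows "a \<longlonglongrightarrow> p" "b \<longlonglongrightarrow> q"
  using tendsto_fst[OF assms] tendsto_snd[OF assms] by simp_all

lemma gadj_closed: "closed (graph_adjoint (G::('a::cplx_hilbert \<times> 'a) set))"
  unfolding closed_sequential_limits
proof (intro allI impI)
  fix s :: "nat \<Rightarrow> 'a \<times> 'a" and l assume h: "(\<forall>n. s n \<in> graph_adjoint G) \<and> s \<longlonglongrightarrow> l"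
  obtain \<eta> \<zeta> where l: "l = (\<eta>, \<zeta>)" by (cases l)
  have a: "(\<lambda>n. fst (s n)) \<longlonglongrightarrow> \<eta>" "(\<lambda>n. snd (s n)) \<longlonglongrightarrow> \<zeta>"
    using tendsto_fst[of s l] tendsto_snd[of s l] h l by auto
  show "l \<in> graph_adjoint G" unfolding l
  proof (rule gadj_memI)
    fix \<xi> x assume g: "(\<xi>, x) \<in> G"
    have e: "\<And>n. cinner x (fst (s n)) = cinner \<xi> (snd (s n))"
      using h g gadj_memD[of "fst (s n)" "snd (s n)" G \<xi> x for n] by auto
    have "(\<lambda>n. cinner x (fst (s n))) \<longlonglongrightarrow> cinner x \<eta>" by (rule tendsto_cinner[OF tendsto_const a(1)])
    moreover have "(\<lambda>n. cinner x (fst (s n))) \<longlonglongrightarrow> cinner \<xi> \<zeta>" unfolding e by (rule tendsto_cinner[OF tendsto_const a(2)])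
    ultimately show "cinner x \<eta> = cinner \<xi> \<zeta>" by (rule LIMSEQ_unique)
  qed
qed

lemma gadj_closure: "graph_adjoint (closure S) = graph_adjoint (S::('a::cplx_hilbert \<times> 'a) set)"
proof
  show "graph_adjoint (closure S) \<subseteq> graph_adjoint S"
  proof clarify
    fix \<eta> \<zeta> assume h: "(\<eta>, \<zeta>) \<in> graph_adjoint (closure S)"
    show "(\<eta>, \<zeta>) \<in> graph_adjoint S"
      by (rule gadj_memI) (use gadj_memD[OF h] closure_subset in blast)
  qed
  show "graph_adjoint S \<subseteq> graph_adjoint (closure S)"
  proof clarify
    fix \<eta> \<zeta> assume h: "(\<eta>, \<zeta>) \<in> graph_adjoint S"
    show "(\<eta>, \<zeta>) \<in> graph_adjoint (closure S)"
    proof (rule gadj_memI)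
      fix \<xi> x assume "(\<xi>, x) \<in> closure S"
      then obtain s where s: "\<And>n. s n \<in> S" "s \<longlonglongrightarrow> (\<xi>, x)" by (auto simp: closure_sequential)
      have a: "(\<lambda>n. fst (s n)) \<longlonglongrightarrow> \<xi>" "(\<lambda>n. snd (s n)) \<longlonglongrightarrow> x"
        using tendsto_fst[OF s(2)] tendsto_snd[OF s(2)] by auto
      have e: "\<And>n. cinner (snd (s n)) \<eta> = cinner (fst (s n)) \<zeta>"
        using h s(1) gadj_memD[of \<eta> \<zeta> S "fst (s n)" "snd (s n)" for n] by auto
      have "(\<lambda>n. cinner (snd (s n)) \<eta>) \<longlonglongrightarrow> cinner x \<eta>" by (rule tendsto_cinner[OF a(2) tendsto_const])
      moreover have "(\<lambda>n. cinner (snd (s n)) \<eta>) \<longlonglongrightarrow> cinner \<xi> \<zeta>" unfolding e by (rule tendsto_cinner[OF a(1) tendsto_const])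
      ultimately show "cinner x \<eta> = cinner \<xi> \<zeta>" by (rule LIMSEQ_unique)
    qed
  qed
qed

lemma gadj_add:
  assumes h1: "(a, b) \<in> graph_adjoint G" and h2: "(c, d) \<in> graph_adjoint (G::('a::cplx_hilbert \<times> 'a) set)"
  shows "(a + c, b + d) \<in> graph_adjoint G"
proof (rule gadj_memI)
  fix \<xi> x assume g: "(\<xi>, x) \<in> G"
  show "cinner x (a + c) = cinner \<xi> (b + d)"
    using gadj_memD[OF h1 g] gadj_memD[OF h2 g] by (simp add: cinner_add_right)
qed

lemma gadj_scaleC: "(a, b) \<in> graph_adjoint G \<Longrightarrow> (c *\<^sub>C a, c *\<^sub>C b) \<in> graph_adjoint (G::('a::cplx_hilbert \<times> 'a) set)"
  by (rule gadj_memI) (auto simp: cinner_scaleC_right dest: gadj_memD)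

lemma gadj_diff:
  assumes h1: "(a, b) \<in> graph_adjoint G" and h2: "(c, d) \<in> graph_adjoint (G::('a::cplx_hilbert \<times> 'a) set)"
  shows "(a - c, b - d) \<in> graph_adjoint G"
proof (rule gadj_memI)
  fix \<xi> x assume g: "(\<xi>, x) \<in> G"
  show "cinner x (a - c) = cinner \<xi> (b - d)"
    using gadj_memD[OF h1 g] gadj_memD[OF h2 g] by (simp add: cinner_diff_right)
qed



section \<open>Resolvent of a positive self-adjoint graph\<close>

lemma psa_closed: "positive_selfadjoint_graph G \<Longrightarrow> closed (G::('a::cplx_hilbert \<times> 'a) set)"
  using gadj_closed[of G] by (simp add: positive_selfadjoint_graph_def)

lemma psa_self: "positive_selfadjoint_graph G \<Longrightarrow> graph_adjoint G = G"
  by (simp add: positive_selfadjoint_graph_def)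

lemma psa_pos: "positive_selfadjoint_graph G \<Longrightarrow> (\<xi>, x) \<in> G \<Longrightarrow> Im (cinner \<xi> x) = 0 \<and> 0 \<le> Re (cinner \<xi> x)"
  by (auto simp: positive_selfadjoint_graph_def)

lemma resolvent:
  fixes G :: "('a::cplx_hilbert \<times> 'a) set"
  assumes P: "positive_selfadjoint_graph G"
  shows "\<exists>Y. bounded_clinear_op Y \<and> positive_op Y \<and> (\<forall>y. norm (Y y) \<le> norm y)
            \<and> (\<forall>y. (Y y, y - Y y) \<in> G) \<and> (\<forall>\<xi> x. (\<xi>, x) \<in> G \<longrightarrow> Y (\<xi> + x) = \<xi>)"
proof -
  have GC: "closed G" using psa_closed[OF P] .
  have Gs: "graph_adjoint G = G" using psa_self[OF P] .
  have gadd: "(a, b) \<in> G \<Longrightarrow> (c, d) \<in> G \<Longrightarrow> (a + c, b + d) \<in> G" for a b c d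
    using gadj_add[of a b G c d] Gs by simp
  have gdiff: "(a, b) \<in> G \<Longrightarrow> (c, d) \<in> G \<Longrightarrow> (a - c, b - d) \<in> G" for a b c d
    using gadj_diff[of a b G c d] Gs by simp
  have gsc: "(a, b) \<in> G \<Longrightarrow> (c *\<^sub>C a, c *\<^sub>C b) \<in> G" for a b c
    using gadj_scaleC[of a b G c] Gs by simp
  have g0: "(0, 0) \<in> G" using gsc[of _ _ 0] P by (cases "G = {}") (auto simp: positive_selfadjoint_graph_def)
  have nrm: "(norm \<xi>)\<^sup>2 + (norm x)\<^sup>2 \<le> (norm (\<xi> + x))\<^sup>2" if "(\<xi>, x) \<in> G" for \<xi> x
    using psa_pos[OF P that] by (simp add: norm_sq_add)
  have uniq: "\<xi> = \<xi>'" if "(\<xi>, x) \<in> G" "(\<xi>', x') \<in> G" "\<xi> + x = \<xi>' + x'" for \<xi> x \<xi>' x'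
  proof -
    have "(\<xi> - \<xi>', x - x') \<in> G" by (rule gdiff[OF that(1) that(2)])
    then have "(norm (\<xi> - \<xi>'))\<^sup>2 + (norm (x - x'))\<^sup>2 \<le> (norm ((\<xi> - \<xi>') + (x - x')))\<^sup>2" by (rule nrm)
    moreover have "(\<xi> - \<xi>') + (x - x') = 0" using that(3) by (simp add: algebra_simps)
    ultimately have "(norm (\<xi> - \<xi>'))\<^sup>2 \<le> 0" by (smt (verit) zero_le_power2 norm_zero power_zero_numeral)
    then show ?thesis by simp
  qed
  define R where "R = {\<xi> + x | \<xi> x. (\<xi>, x) \<in> G}"
  have RS: "csubspace R" unfolding csubspace_def R_def
  proof (intro conjI ballI allI)
    show "0 \<in> {\<xi> + x |\<xi> x. (\<xi>, x) \<in> G}" using g0 by force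
    fix a b assume "a \<in> {\<xi> + x |\<xi> x. (\<xi>, x) \<in> G}" "b \<in> {\<xi> + x |\<xi> x. (\<xi>, x) \<in> G}"
    then obtain \<xi> x \<xi>' x' where "a = \<xi> + x" "(\<xi>, x) \<in> G" "b = \<xi>' + x'" "(\<xi>', x') \<in> G" by blast
    then show "a + b \<in> {\<xi> + x |\<xi> x. (\<xi>, x) \<in> G}" using gadd[of \<xi> x \<xi>' x']
      by (intro CollectI exI[of _ "\<xi> + \<xi>'"] exI[of _ "x + x'"]) (simp add: algebra_simps)
  next
    fix c a assume "a \<in> {\<xi> + x |\<xi> x. (\<xi>, x) \<in> G}"
    then obtain \<xi> x where "a = \<xi> + x" "(\<xi>, x) \<in> G" by blast
    then show "c *\<^sub>C a \<in> {\<xi> + x |\<xi> x. (\<xi>, x) \<in> G}" using gsc[of \<xi> x c]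
      by (intro CollectI exI[of _ "c *\<^sub>C \<xi>"] exI[of _ "c *\<^sub>C x"]) (simp add: scaleC_add_right)
  qed
  have RC: "closed R" unfolding closed_sequential_limits
  proof (intro allI impI)
    fix y l assume h: "(\<forall>n. y n \<in> R) \<and> y \<longlonglongrightarrow> l"
    then have "\<forall>n. \<exists>p. (fst p, snd p) \<in> G \<and> y n = fst p + snd p" unfolding R_def by force
    then obtain p where p: "\<And>n. (fst (p n), snd (p n)) \<in> G" "\<And>n. y n = fst (p n) + snd (p n)"
      using choice[of "\<lambda>n p. (fst p, snd p) \<in> G \<and> y n = fst p + snd p"] by blast
    have cy: "Cauchy y" using h convergent_Cauchy convergent_def by blast
    have nd: "norm (fst (p m) - fst (p n)) \<le> norm (y m - y n)" for m n
    proof -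
      have "(fst (p m) - fst (p n), snd (p m) - snd (p n)) \<in> G" by (rule gdiff[OF p(1) p(1)])
      then have "(norm (fst (p m) - fst (p n)))\<^sup>2 + (norm (snd (p m) - snd (p n)))\<^sup>2
          \<le> (norm ((fst (p m) - fst (p n)) + (snd (p m) - snd (p n))))\<^sup>2" by (rule nrm)
      moreover have "(fst (p m) - fst (p n)) + (snd (p m) - snd (p n)) = y m - y n" by (simp add: p(2) algebra_simps)
      ultimately have "(norm (fst (p m) - fst (p n)))\<^sup>2 \<le> (norm (y m - y n))\<^sup>2"
        by (smt (verit) zero_le_power2)
      then show ?thesis by (rule power2_le_imp_le) simp
    qed
    have "Cauchy (\<lambda>n. fst (p n))"
    proof (rule metric_CauchyI)
      fix e :: real assume "e > 0"
      then obtain M where M: "\<forall>m\<ge>M. \<forall>n\<ge>M. dist (y m) (y n) < e" using cy metric_CauchyD by blast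
      show "\<exists>M. \<forall>m\<ge>M. \<forall>n\<ge>M. dist (fst (p m)) (fst (p n)) < e"
      proof (rule exI[of _ M], intro allI impI)
        fix m n assume "m \<ge> M" "n \<ge> M"
        then have "norm (y m - y n) < e" using M by (simp add: dist_norm)
        then show "dist (fst (p m)) (fst (p n)) < e" using nd[of m n] by (simp add: dist_norm)
      qed
    qed
    then obtain \<xi> where xi: "(\<lambda>n. fst (p n)) \<longlonglongrightarrow> \<xi>" using Cauchy_convergent_iff convergent_def by blast
    have "(\<lambda>n. snd (p n)) = (\<lambda>n. y n - fst (p n))" using p(2) by (simp add: algebra_simps)
    then have xl: "(\<lambda>n. snd (p n)) \<longlonglongrightarrow> l - \<xi>" using tendsto_diff[OF conjunct2[OF h] xi] by simp
    have "(\<lambda>n. (fst (p n), snd (p n))) \<longlonglongrightarrow> (\<xi>, l - \<xi>)" by (rule tendsto_Pair[OF xi xl])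
    have cl: "\<And>x l. (\<forall>n. x n \<in> G) \<Longrightarrow> x \<longlonglongrightarrow> l \<Longrightarrow> l \<in> G" using GC unfolding closed_sequential_limits by blast
    have "(\<xi>, l - \<xi>) \<in> G" by (rule cl[OF _ \<open>(\<lambda>n. (fst (p n), snd (p n))) \<longlonglongrightarrow> (\<xi>, l - \<xi>)\<close>]) (use p(1) in blast)
    then show "l \<in> R" unfolding R_def by (intro CollectI exI[of _ \<xi>] exI[of _ "l - \<xi>"]) simp
  qed
  have RU: "R = UNIV"
  proof (rule orth_closed_UNIV[OF RS RC])
    fix u assume o: "\<forall>k\<in>R. cinner k u = 0"
    have "(u, - u) \<in> graph_adjoint G"
    proof (rule gadj_memI)
      fix \<xi> x assume "(\<xi>, x) \<in> G"
      then have "cinner (\<xi> + x) u = 0" using o unfolding R_def by blast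
      then have h0: "cinner \<xi> u + cinner x u = 0" by (simp add: cinner_add_left)
      have "cinner x u = (cinner \<xi> u + cinner x u) - cinner \<xi> u" by simp
      also have "\<dots> = - cinner \<xi> u" using h0 by simp
      finally show "cinner x u = cinner \<xi> (- u)" by (simp add: cinner_minus_right)
    qed
    then have "(u, - u) \<in> G" using Gs by simp
    then have "0 \<le> Re (cinner u (- u))" using psa_pos[OF P] by blast
    then have "(norm u)\<^sup>2 \<le> 0" by (simp add: cinner_minus_right cinner_self)
    then show "u = 0" by simp
  qed
  define Y where "Y y = (SOME \<xi>. \<exists>x. (\<xi>, x) \<in> G \<and> \<xi> + x = y)" for y
  have Yex: "\<exists>x. (Y y, x) \<in> G \<and> Y y + x = y" for y
  proof -
    have "y \<in> R" using RU by simp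
    then have "\<exists>\<xi> x. (\<xi>, x) \<in> G \<and> \<xi> + x = y" unfolding R_def by blast
    then show ?thesis unfolding Y_def by (rule someI_ex)
  qed
  have YG: "(Y y, y - Y y) \<in> G" for y
  proof -
    obtain x where "(Y y, x) \<in> G" "Y y + x = y" using Yex by blast
    moreover then have "x = y - Y y" by (simp add: algebra_simps)
    ultimately show ?thesis by simp
  qed
  have Yu: "Y (\<xi> + x) = \<xi>" if "(\<xi>, x) \<in> G" for \<xi> x
    using uniq[OF YG[of "\<xi> + x"] that] by simp
  have Yadd: "Y (a + b) = Y a + Y b" for a b
  proof -
    have "(Y a + Y b, (a - Y a) + (b - Y b)) \<in> G" by (rule gadd[OF YG YG])
    then have "Y ((Y a + Y b) + ((a - Y a) + (b - Y b))) = Y a + Y b" by (rule Yu)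
    moreover have "(Y a + Y b) + ((a - Y a) + (b - Y b)) = a + b" by (simp add: algebra_simps)
    ultimately show ?thesis by simp
  qed
  have Ysc: "Y (c *\<^sub>C a) = c *\<^sub>C Y a" for c a
  proof -
    have "(c *\<^sub>C Y a, c *\<^sub>C (a - Y a)) \<in> G" by (rule gsc[OF YG])
    then have "Y (c *\<^sub>C Y a + c *\<^sub>C (a - Y a)) = c *\<^sub>C Y a" by (rule Yu)
    moreover have "c *\<^sub>C Y a + c *\<^sub>C (a - Y a) = c *\<^sub>C a" by (simp add: scaleC_add_right[symmetric])
    ultimately show ?thesis by simp
  qed
  have Ynorm: "norm (Y y) \<le> norm y" for y
  proof -
    have "(norm (Y y))\<^sup>2 + (norm (y - Y y))\<^sup>2 \<le> (norm (Y y + (y - Y y)))\<^sup>2" by (rule nrm[OF YG])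
    then have "(norm (Y y))\<^sup>2 \<le> (norm y)\<^sup>2" by (smt (verit) add_diff_cancel_left' diff_add_cancel zero_le_power2)
    then show ?thesis by (rule power2_le_imp_le) simp
  qed
  have Ypos: "positive_op Y" unfolding positive_op_def
  proof
    fix y
    have pp: "Im (cinner (Y y) (y - Y y)) = 0 \<and> 0 \<le> Re (cinner (Y y) (y - Y y))" using psa_pos[OF P YG] .
    have "cinner y (Y y) = cinner (Y y + (y - Y y)) (Y y)" by simp
    also have "\<dots> = cinner (Y y) (Y y) + cnj (cinner (Y y) (y - Y y))"
      by (simp only: cinner_add_left cinner_commute[of "y - Y y" "Y y"])
    finally have e: "cinner y (Y y) = complex_of_real ((norm (Y y))\<^sup>2) + cnj (cinner (Y y) (y - Y y))"
      by (simp add: cinner_self)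
    show "Im (cinner y (Y y)) = 0 \<and> 0 \<le> Re (cinner y (Y y))" using pp unfolding e by simp
  qed
  have "bounded_clinear_op Y" by (rule bco_intro[where K=1]) (use Yadd Ysc Ynorm in auto)
  then show ?thesis using Ypos Ynorm YG Yu by blast
qed



lemma herm_cnj:
  assumes T: "bounded_clinear_op (T::'a::cplx_hilbert \<Rightarrow> 'a)" and P: "positive_op T"
  shows "cinner u (T v) = cnj (cinner v (T u))"
  using pos_herm[OF T P, of v u] cinner_commute[of "T v" u] cinner_commute[of v "T u"] by simp

lemma pc_sq:
  assumes T: "bounded_clinear_op (T::'a::cplx_hilbert \<Rightarrow> 'a)" and P: "positive_op T"
    and N: "\<And>x. norm (T x) \<le> norm x"
  shows "(norm (T x))\<^sup>2 \<le> Re (cinner x (T x))"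
proof -
  define B where "B u v = cinner u (T v)" for u v
  have cs: "(cmod (B (T x) x))\<^sup>2 \<le> Re (B (T x) (T x)) * Re (B x x)"
  proof (rule gen_cs)
    show "B (a + b) c = B a c + B b c" for a b c by (simp add: B_def cinner_add_left)
    show "B (c *\<^sub>C a) b = cnj c * B a b" for a b c by (simp add: B_def cinner_scaleC_left)
    show "B a b = cnj (B b a)" for a b unfolding B_def by (rule herm_cnj[OF T P])
    show "0 \<le> Re (B a a)" for a using P by (simp add: B_def positive_op_def)
  qed
  have e1: "B (T x) x = complex_of_real ((norm (T x))\<^sup>2)" by (simp add: B_def cinner_self)
  have e2: "Re (B (T x) (T x)) \<le> (norm (T x))\<^sup>2"
  proof -
    have "Re (B (T x) (T x)) \<le> cmod (B (T x) (T x))" by (rule complex_Re_le_cmod)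
    also have "\<dots> \<le> norm (T x) * norm (T (T x))" unfolding B_def by (rule cauchy_schwarz)
    also have "\<dots> \<le> norm (T x) * norm (T x)" using N[of "T x"] by (intro mult_left_mono) simp_all
    finally show ?thesis by (simp add: power2_eq_square)
  qed
  have px: "Re (B x x) \<ge> 0" using P by (simp add: B_def positive_op_def)
  have "(norm (T x))\<^sup>2 * (norm (T x))\<^sup>2 \<le> (norm (T x))\<^sup>2 * Re (B x x)"
  proof -
    have c1: "cmod (B (T x) x) = (norm (T x))\<^sup>2" unfolding e1 norm_of_real by simp
    have "(norm (T x))\<^sup>2 * (norm (T x))\<^sup>2 = (cmod (B (T x) x))\<^sup>2" unfolding c1 by (simp add: power2_eq_square)
    also have "\<dots> \<le> Re (B (T x) (T x)) * Re (B x x)" by (rule cs)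
    also have "\<dots> \<le> (norm (T x))\<^sup>2 * Re (B x x)" using e2 px by (rule mult_right_mono)
    finally show ?thesis .
  qed
  then show ?thesis
  proof (cases "norm (T x) = 0")
    case True then show ?thesis using px by (simp add: B_def)
  next
    case False
    then have pos: "(norm (T x))\<^sup>2 > 0" by simp
    have "(norm (T x))\<^sup>2 \<le> Re (B x x)"
      using \<open>(norm (T x))\<^sup>2 * (norm (T x))\<^sup>2 \<le> (norm (T x))\<^sup>2 * Re (B x x)\<close> mult_le_cancel_left_pos[OF pos] by blast
    then show ?thesis by (simp only: B_def)
  qed
qed

lemma onorm_bound1:
  assumes T: "bounded_clinear_op (T::'a::cplx_hilbert \<Rightarrow> 'a)" and o: "onorm T \<le> 1"
  shows "norm (T x) \<le> norm x"
proof -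
  have "norm (T x) \<le> onorm T * norm x" by (rule onorm[OF bco_bounded_linear[OF T]])
  also have "\<dots> \<le> 1 * norm x" using o by (rule mult_right_mono) simp
  finally show ?thesis by simp
qed

locale setting =
  fixes D :: "'h::cplx_hilbert set" and M0 :: "('h \<Rightarrow> 'h) set" and A :: "'h \<Rightarrow> 'h"
  assumes D: "dense_subspace D"
    and M0: "unital_cstar_algebra M0"
    and M0D: "\<forall>X\<in>M0. \<forall>\<xi>\<in>D. X \<xi> \<in> D"
    and Acl: "A \<in> tau_closure D (bicommutant M0)"
    and MD: "\<forall>X\<in>bicommutant M0. \<forall>\<xi>\<in>D. X \<xi> \<in> D"
begin

abbreviation "M \<equiv> bicommutant M0"
abbreviation "C \<equiv> commutant M0"

lemma M0B: "\<forall>U\<in>M0. bounded_clinear_op U" by (rule conjunct1[OF M0[unfolded unital_cstar_algebra_def]])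
lemma M0A: "\<forall>U\<in>M0. adj UNIV U \<in> M0"
  by (rule M0[unfolded unital_cstar_algebra_def, THEN conjunct2, THEN conjunct2, THEN conjunct2, THEN conjunct2, THEN conjunct1])

lemma C_adj: "S \<in> C \<Longrightarrow> adj UNIV S \<in> C" using comm_adj[OF M0B M0A] by blast
lemma C_bco: "S \<in> C \<Longrightarrow> bounded_clinear_op S" by (rule comm_bco)
lemma M_bco: "X \<in> M \<Longrightarrow> bounded_clinear_op X" unfolding bicommutant_def by (rule comm_bco)
lemma M_comm: "X \<in> M \<Longrightarrow> S \<in> C \<Longrightarrow> X (S x) = S (X x)"
  unfolding bicommutant_def by (rule comm_apply)
lemma M_adj: "X \<in> M \<Longrightarrow> adj UNIV X \<in> M"
  unfolding bicommutant_def by (rule comm_adj) (auto intro: C_bco C_adj)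
lemma MI: "bounded_clinear_op X \<Longrightarrow> (\<And>S x. S \<in> C \<Longrightarrow> X (S x) = S (X x)) \<Longrightarrow> X \<in> M"
  unfolding bicommutant_def by (rule commI)
lemma M_id: "id \<in> M" unfolding bicommutant_def by (rule comm_id)
lemma M_plus: "X \<in> M \<Longrightarrow> Z \<in> M \<Longrightarrow> (\<lambda>x. X x + Z x) \<in> M"
  unfolding bicommutant_def by (rule comm_plus) (auto intro: C_bco)
lemma M_comp: "X \<in> M \<Longrightarrow> Z \<in> M \<Longrightarrow> X \<circ> Z \<in> M"
  unfolding bicommutant_def by (rule comm_comp)
lemma M_scal: "X \<in> M \<Longrightarrow> (\<lambda>x. c *\<^sub>C X x) \<in> M"
  unfolding bicommutant_def by (rule comm_scal) (auto intro: C_bco)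

lemma A_Ldag: "A \<in> Ldag D" using Acl by (simp add: tau_closure_def tau_s_star_limit_of_def)

lemma A_net: "\<exists>F :: ('h \<Rightarrow> 'h) filter. F \<noteq> bot \<and> eventually (\<lambda>X. X \<in> M) F \<and>
        (\<forall>\<xi>\<in>D. ((\<lambda>X. X \<xi>) \<longlongrightarrow> A \<xi>) F \<and> ((\<lambda>X. adj D X \<xi>) \<longlongrightarrow> adj D A \<xi>) F)"
  using Acl by (simp add: tau_closure_def tau_s_star_limit_of_def)

lemma A_adj: "\<xi> \<in> D \<Longrightarrow> \<eta> \<in> D \<Longrightarrow> cinner (A \<xi>) \<eta> = cinner \<xi> (adj D A \<eta>)"
proof -
  assume x: "\<xi> \<in> D" and e: "\<eta> \<in> D"
  have "\<eta> \<in> adj_dom D A" using A_Ldag e unfolding Ldag_def by blast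
  then show ?thesis by (rule adj_prop[OF D _ x])
qed

definition "Gr = {(\<xi>, A \<xi>) | \<xi>. \<xi> \<in> D}"

lemma ocg: "op_closure_graph D A = closure Gr" by (simp add: op_closure_graph_def Gr_def)

lemma closure_D: "closure D = UNIV" using D by (simp add: dense_subspace_def)


end



context setting begin

lemma approx_D: "\<exists>s. (\<forall>n. s n \<in> D) \<and> s \<longlonglongrightarrow> y"
proof -
  have "y \<in> closure D" by (simp add: closure_D)
  then show ?thesis unfolding closure_sequential .
qed

lemma ii_iii:
  assumes Y: "Y \<in> unit_ball_pos M" and i1: "\<forall>\<xi>\<in>D. Y \<xi> + A (Y \<xi>) = \<xi>" and i2: "\<forall>\<xi>\<in>D. Y (\<xi> + A \<xi>) = \<xi>"
  shows "positive_selfadjoint_graph (op_closure_graph D A)"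
proof -
  have YM: "Y \<in> M" and YP: "positive_op Y" and Yo: "onorm Y \<le> 1" using Y by (auto simp: unit_ball_pos_def)
  have YB: "bounded_clinear_op Y" by (rule M_bco[OF YM])
  have Yn: "norm (Y x) \<le> norm x" for x by (rule onorm_bound1[OF YB Yo])
  have Yh: "cinner (Y x) y = cinner x (Y y)" for x y by (rule pos_herm[OF YB YP])
  have YD: "Y \<xi> \<in> D" if "\<xi> \<in> D" for \<xi> using MD YM that by blast
  have Yinj: "u = 0" if "Y u = 0" for u
  proof (rule dense_orth[OF D])
    fix \<xi> assume x: "\<xi> \<in> D"
    have "cinner \<xi> u = cinner (Y (\<xi> + A \<xi>)) u" using i2 x by simp
    also have "\<dots> = cinner (\<xi> + A \<xi>) (Y u)" by (rule Yh)
    finally show "cinner \<xi> u = 0" using that by simp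
  qed
  define G0 where "G0 = range (\<lambda>\<eta>. (Y \<eta>, \<eta> - Y \<eta>))"
  have G0m: "(Y \<eta>, \<eta> - Y \<eta>) \<in> G0" for \<eta> by (simp add: G0_def)
  have G0e: "\<exists>\<eta>. p = (Y \<eta>, \<eta> - Y \<eta>)" if "p \<in> G0" for p using that by (auto simp: G0_def)
  have G0C: "closed G0" unfolding closed_sequential_limits
  proof (intro allI impI)
    fix s l assume h: "(\<forall>n. s n \<in> G0) \<and> s \<longlonglongrightarrow> l"
    obtain a b where l: "l = (a, b)" by (cases l)
    define e where "e n = fst (s n) + snd (s n)" for n
    have sn: "s n = (Y (e n), e n - Y (e n))" for n
    proof -
      obtain \<eta> where "s n = (Y \<eta>, \<eta> - Y \<eta>)" using G0e h by blast
      then show ?thesis by (simp add: e_def)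
    qed
    have fa: "(\<lambda>n. fst (s n)) \<longlonglongrightarrow> a" and sb: "(\<lambda>n. snd (s n)) \<longlonglongrightarrow> b"
      using tendsto_fst[of s l] tendsto_snd[of s l] h l by auto
    have ee: "e \<longlonglongrightarrow> a + b" unfolding e_def by (rule tendsto_add[OF fa sb])
    have "(\<lambda>n. Y (e n)) \<longlonglongrightarrow> Y (a + b)" by (rule bco_tendsto[OF YB ee])
    moreover have "(\<lambda>n. Y (e n)) \<longlonglongrightarrow> a" using fa by (simp add: sn)
    ultimately have a: "a = Y (a + b)" by (rule LIMSEQ_unique[rotated])
    have "l = (Y (a + b), (a + b) - Y (a + b))" using l a by (simp add: algebra_simps)
    then show "l \<in> G0" by (simp add: G0m)
  qed
  have GrG0: "Gr \<subseteq> G0"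
  proof
    fix p assume "p \<in> Gr"
    then obtain \<xi> where x: "\<xi> \<in> D" "p = (\<xi>, A \<xi>)" by (auto simp: Gr_def)
    have "p = (Y (\<xi> + A \<xi>), (\<xi> + A \<xi>) - Y (\<xi> + A \<xi>))" using x i2 by simp
    then show "p \<in> G0" by (simp add: G0m)
  qed
  have G0cl: "G0 \<subseteq> closure Gr"
  proof
    fix p assume "p \<in> G0"
    then obtain \<eta> where p: "p = (Y \<eta>, \<eta> - Y \<eta>)" using G0e by blast
    obtain s where s: "\<And>n. s n \<in> D" "s \<longlonglongrightarrow> \<eta>" using approx_D[of \<eta>] by blast
    have inG: "(Y (s n), s n - Y (s n)) \<in> Gr" for n
    proof -
      have "A (Y (s n)) = s n - Y (s n)" using i1 s(1)[of n] by (simp add: algebra_simps)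
      then show ?thesis using YD[OF s(1)[of n]] unfolding Gr_def by force
    qed
    have "(\<lambda>n. (Y (s n), s n - Y (s n))) \<longlonglongrightarrow> (Y \<eta>, \<eta> - Y \<eta>)"
      by (intro tendsto_Pair tendsto_diff bco_tendsto[OF YB] s(2))
    then show "p \<in> closure Gr" unfolding p closure_sequential
      by (intro exI[of _ "\<lambda>n. (Y (s n), s n - Y (s n))"]) (simp add: inG)
  qed
  have G: "op_closure_graph D A = G0"
    unfolding ocg using closure_minimal[OF GrG0 G0C] G0cl by blast
  show ?thesis unfolding G positive_selfadjoint_graph_def
  proof (intro conjI)
    show "is_graph G0" unfolding is_graph_def
    proof (intro allI impI)
      fix x y z assume h: "(x, y) \<in> G0 \<and> (x, z) \<in> G0"
      obtain \<eta> where e1: "(x, y) = (Y \<eta>, \<eta> - Y \<eta>)" using G0e h by blast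
      obtain \<eta>' where e2: "(x, z) = (Y \<eta>', \<eta>' - Y \<eta>')" using G0e h by blast
      have "Y (\<eta> - \<eta>') = 0" using e1 e2 by (simp add: bco_diff[OF YB])
      then have "\<eta> - \<eta>' = 0" by (rule Yinj)
      then have "\<eta> = \<eta>'" by simp
      then show "y = z" using e1 e2 by simp
    qed
    show "closure (Domain G0) = UNIV"
    proof -
      have "D \<subseteq> Domain G0"
      proof
        fix \<xi> assume "\<xi> \<in> D"
        then have "(\<xi>, (\<xi> + A \<xi>) - Y (\<xi> + A \<xi>)) \<in> G0" using G0m[of "\<xi> + A \<xi>"] i2 by simp
        then show "\<xi> \<in> Domain G0" by blast
      qed
      then have "closure D \<subseteq> closure (Domain G0)" by (rule closure_mono)
      then show ?thesis using closure_D by blast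
    qed
    show "graph_adjoint G0 = G0"
    proof
      show "graph_adjoint G0 \<subseteq> G0"
      proof clarify
        fix u w assume h: "(u, w) \<in> graph_adjoint G0"
        have "cinner \<eta> u = cinner \<eta> (Y (u + w))" for \<eta>
        proof -
          have "cinner (\<eta> - Y \<eta>) u = cinner (Y \<eta>) w" by (rule gadj_memD[OF h G0m])
          then have "cinner \<eta> u = cinner (Y \<eta>) u + cinner (Y \<eta>) w" by (simp add: cinner_diff_left algebra_simps)
          also have "\<dots> = cinner (Y \<eta>) (u + w)" by (simp add: cinner_add_right)
          also have "\<dots> = cinner \<eta> (Y (u + w))" by (rule Yh)
          finally show ?thesis .
        qed
        then have "u = Y (u + w)" by (rule inner_ext)
        then have e: "Y (u + w) = u" by simp
        have "(Y (u + w), (u + w) - Y (u + w)) \<in> G0" by (rule G0m)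
        then show "(u, w) \<in> G0" unfolding e by simp
      qed
      show "G0 \<subseteq> graph_adjoint G0"
      proof
        fix p assume "p \<in> G0"
        then obtain \<eta>' where p: "p = (Y \<eta>', \<eta>' - Y \<eta>')" using G0e by blast
        show "p \<in> graph_adjoint G0" unfolding p
        proof (rule gadj_memI)
          fix \<xi> x assume "(\<xi>, x) \<in> G0"
          then obtain \<eta> where q: "(\<xi>, x) = (Y \<eta>, \<eta> - Y \<eta>)" using G0e by blast
          have "cinner (\<eta> - Y \<eta>) (Y \<eta>') = cinner \<eta> (Y \<eta>') - cinner (Y \<eta>) (Y \<eta>')" by (simp add: cinner_diff_left)
          also have "\<dots> = cinner (Y \<eta>) \<eta>' - cinner (Y \<eta>) (Y \<eta>')" by (simp add: Yh)
          also have "\<dots> = cinner (Y \<eta>) (\<eta>' - Y \<eta>')" by (simp add: cinner_diff_right)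
          finally show "cinner x (Y \<eta>') = cinner \<xi> (\<eta>' - Y \<eta>')" using q by simp
        qed
      qed
    qed
    show "\<forall>(\<xi>, x)\<in>G0. Im (cinner \<xi> x) = 0 \<and> 0 \<le> Re (cinner \<xi> x)"
    proof clarify
      fix \<xi> x assume "(\<xi>, x) \<in> G0"
      then obtain \<eta> where q: "(\<xi>, x) = (Y \<eta>, \<eta> - Y \<eta>)" using G0e by blast
      have e: "cinner (Y \<eta>) (\<eta> - Y \<eta>) = cinner \<eta> (Y \<eta>) - complex_of_real ((norm (Y \<eta>))\<^sup>2)"
        by (simp add: cinner_diff_right Yh cinner_self)
      have p1: "Im (cinner \<eta> (Y \<eta>)) = 0" using YP by (simp add: positive_op_def)
      have p2: "(norm (Y \<eta>))\<^sup>2 \<le> Re (cinner \<eta> (Y \<eta>))" by (rule pc_sq[OF YB YP Yn])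
      show "Im (cinner \<xi> x) = 0 \<and> 0 \<le> Re (cinner \<xi> x)" using q e p1 p2 by simp
    qed
  qed
qed

end



context setting begin

lemma iii_ii:
  assumes P: "positive_selfadjoint_graph (op_closure_graph D A)"
  shows "\<exists>Y\<in>unit_ball_pos M. (\<forall>\<xi>\<in>D. Y \<xi> + A (Y \<xi>) = \<xi>) \<and> (\<forall>\<xi>\<in>D. Y (\<xi> + A \<xi>) = \<xi>)"
proof -
  define G where "G = op_closure_graph D A"
  have GG: "G = closure Gr" by (simp add: G_def ocg)
  obtain Y where YB: "bounded_clinear_op Y" and YP: "positive_op Y" and Yn: "\<forall>y. norm (Y y) \<le> norm y"
    and YG: "\<forall>y. (Y y, y - Y y) \<in> G" and Yu: "\<forall>\<xi> x. (\<xi>, x) \<in> G \<longrightarrow> Y (\<xi> + x) = \<xi>"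
    using resolvent[OF P] unfolding G_def by blast
  have isg: "is_graph G" using P by (simp add: G_def positive_selfadjoint_graph_def)
  have Gs: "graph_adjoint G = G" using P by (simp add: G_def positive_selfadjoint_graph_def)
  have GC: "closed G" unfolding GG by simp
  have GrG: "Gr \<subseteq> G" unfolding GG by (rule closure_subset)
  have GrA: "graph_adjoint Gr = G" using Gs gadj_closure[of Gr] unfolding GG by simp
  have inGr: "(\<xi>, A \<xi>) \<in> Gr" if "\<xi> \<in> D" for \<xi> using that by (auto simp: Gr_def)
  have GrE: "\<exists>\<xi>. \<xi> \<in> D \<and> p = (\<xi>, A \<xi>)" if "p \<in> Gr" for p using that by (auto simp: Gr_def)
  obtain F :: "('h \<Rightarrow> 'h) filter" where F: "F \<noteq> bot" and ev: "eventually (\<lambda>X. X \<in> M) F"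
    and conv: "\<forall>\<xi>\<in>D. ((\<lambda>X. X \<xi>) \<longlongrightarrow> A \<xi>) F \<and> ((\<lambda>X. adj D X \<xi>) \<longlongrightarrow> adj D A \<xi>) F"
    using A_net by blast
  have AdjA: "adj D A \<zeta> = A \<zeta>" if z: "\<zeta> \<in> D" for \<zeta>
  proof -
    have "(\<zeta>, adj D A \<zeta>) \<in> graph_adjoint Gr"
    proof (rule gadj_memI)
      fix \<xi> x assume "(\<xi>, x) \<in> Gr"
      then obtain \<xi>' where "\<xi>' \<in> D" "(\<xi>, x) = (\<xi>', A \<xi>')" using GrE by blast
      then show "cinner x \<zeta> = cinner \<xi> (adj D A \<zeta>)" using A_adj[of \<xi>' \<zeta>] z by simp
    qed
    then have "(\<zeta>, adj D A \<zeta>) \<in> G" using GrA by simp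
    moreover have "(\<zeta>, A \<zeta>) \<in> G" using GrG inGr[OF z] by blast
    ultimately show ?thesis using isg unfolding is_graph_def by blast
  qed
  have SD: "(S \<zeta>, S (A \<zeta>)) \<in> G" if S: "S \<in> C" and z: "\<zeta> \<in> D" for S \<zeta>
  proof -
    have SB: "bounded_clinear_op S" using S by (rule C_bco)
    have "(S \<zeta>, S (A \<zeta>)) \<in> graph_adjoint Gr"
    proof (rule gadj_memI)
      fix \<xi> x assume "(\<xi>, x) \<in> Gr"
      then obtain \<xi>' where x': "\<xi>' \<in> D" "(\<xi>, x) = (\<xi>', A \<xi>')" using GrE by blast
      have l1: "((\<lambda>X. cinner (X \<xi>') (S \<zeta>)) \<longlongrightarrow> cinner (A \<xi>') (S \<zeta>)) F"
        using conv x'(1) by (intro tendsto_cinner tendsto_const) blast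
      have l2: "((\<lambda>X. cinner (adj UNIV S \<xi>') (adj D X \<zeta>)) \<longlongrightarrow> cinner (adj UNIV S \<xi>') (adj D A \<zeta>)) F"
        using conv z by (intro tendsto_cinner tendsto_const) blast
      have evq: "eventually (\<lambda>X. cinner (adj UNIV S \<xi>') (adj D X \<zeta>) = cinner (X \<xi>') (S \<zeta>)) F"
        using ev
      proof (rule eventually_mono)
        fix X assume XM: "X \<in> M"
        have XB: "bounded_clinear_op X" by (rule M_bco[OF XM])
        have XA: "adj UNIV X \<in> M" by (rule M_adj[OF XM])
        have "cinner (X \<xi>') (S \<zeta>) = cinner \<xi>' (adj UNIV X (S \<zeta>))" by (rule adj_UNIV[OF XB])
        also have "adj UNIV X (S \<zeta>) = S (adj UNIV X \<zeta>)" by (rule M_comm[OF XA S])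
        also have "cinner \<xi>' (S (adj UNIV X \<zeta>)) = cinner (adj UNIV S \<xi>') (adj UNIV X \<zeta>)"
          by (rule adj_UNIV_left[OF SB, symmetric])
        also have "adj UNIV X \<zeta> = adj D X \<zeta>" by (rule adj_restrict[OF D XB, symmetric])
        finally show "cinner (adj UNIV S \<xi>') (adj D X \<zeta>) = cinner (X \<xi>') (S \<zeta>)" by simp
      qed
      have l3: "((\<lambda>X. cinner (X \<xi>') (S \<zeta>)) \<longlongrightarrow> cinner (adj UNIV S \<xi>') (adj D A \<zeta>)) F"
        using tendsto_cong[OF evq] l2 by blast
      have "cinner (A \<xi>') (S \<zeta>) = cinner (adj UNIV S \<xi>') (adj D A \<zeta>)"
        by (rule tendsto_unique[OF F l1 l3])
      also have "\<dots> = cinner (adj UNIV S \<xi>') (A \<zeta>)" using AdjA[OF z] by simp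
      also have "\<dots> = cinner \<xi>' (S (A \<zeta>))" by (rule adj_UNIV_left[OF SB])
      finally show "cinner x (S \<zeta>) = cinner \<xi> (S (A \<zeta>))" using x'(2) by simp
    qed
    then show ?thesis using GrA by simp
  qed
  have SG: "(S \<xi>, S x) \<in> G" if S: "S \<in> C" and p: "(\<xi>, x) \<in> G" for S \<xi> x
  proof -
    have SB: "bounded_clinear_op S" using S by (rule C_bco)
    obtain q where q: "\<forall>n. q n \<in> Gr" "q \<longlonglongrightarrow> (\<xi>, x)" using p unfolding GG closure_sequential by blast
    have "\<forall>n. \<exists>\<zeta>. \<zeta> \<in> D \<and> q n = (\<zeta>, A \<zeta>)" using q(1) GrE by blast
    then obtain z where z: "\<And>n. z n \<in> D" "\<And>n. q n = (z n, A (z n))"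
      using choice[of "\<lambda>n \<zeta>. \<zeta> \<in> D \<and> q n = (\<zeta>, A \<zeta>)"] by blast
    have c1: "z \<longlonglongrightarrow> \<xi>" using tendsto_fst[OF q(2)] z(2) by simp
    have c2: "(\<lambda>n. A (z n)) \<longlonglongrightarrow> x" using tendsto_snd[OF q(2)] z(2) by simp
    have t: "(\<lambda>n. (S (z n), S (A (z n)))) \<longlonglongrightarrow> (S \<xi>, S x)"
      by (intro tendsto_Pair bco_tendsto[OF SB] c1 c2)
    have m: "\<forall>n. (S (z n), S (A (z n))) \<in> G" using SD[OF S z(1)] by blast
    have cl: "\<And>x l. (\<forall>n. x n \<in> G) \<Longrightarrow> x \<longlonglongrightarrow> l \<Longrightarrow> l \<in> G" using GC unfolding closed_sequential_limits by blast
    show ?thesis by (rule cl[OF m t])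
  qed
  have YM: "Y \<in> M"
  proof (rule MI[OF YB])
    fix S x assume S: "S \<in> C"
    have SB: "bounded_clinear_op S" using S by (rule C_bco)
    have "(S (Y x), S (x - Y x)) \<in> G" by (rule SG[OF S]) (use YG in blast)
    then have "Y (S (Y x) + S (x - Y x)) = S (Y x)" using Yu by blast
    moreover have "S (Y x) + S (x - Y x) = S x" by (simp add: bco_diff[OF SB])
    ultimately show "Y (S x) = S (Y x)" by simp
  qed
  have Yo: "onorm Y \<le> 1" by (rule onorm_bound) (use Yn in simp_all)
  have Yb: "Y \<in> unit_ball_pos M" using YM YP Yo by (simp add: unit_ball_pos_def)
  have i2: "\<forall>\<xi>\<in>D. Y (\<xi> + A \<xi>) = \<xi>" using Yu GrG inGr by blast
  have i1: "\<forall>\<xi>\<in>D. Y \<xi> + A (Y \<xi>) = \<xi>"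
  proof
    fix \<xi> assume x: "\<xi> \<in> D"
    have yd: "Y \<xi> \<in> D" using MD YM x by blast
    have "(Y \<xi>, A (Y \<xi>)) \<in> G" using GrG inGr[OF yd] by blast
    moreover have "(Y \<xi>, \<xi> - Y \<xi>) \<in> G" using YG by blast
    ultimately have "A (Y \<xi>) = \<xi> - Y \<xi>" using isg unfolding is_graph_def by blast
    then show "Y \<xi> + A (Y \<xi>) = \<xi>" by simp
  qed
  show ?thesis using Yb i1 i2 by blast
qed

end



lemma res_bounded:
  assumes XB: "bounded_clinear_op (X::'a::cplx_hilbert \<Rightarrow> 'a)" and XP: "positive_op X"
  shows "\<exists>R. bounded_clinear_op R \<and> positive_op R \<and> (\<forall>y. norm (R y) \<le> norm y)
           \<and> (\<forall>y. R y + X (R y) = y) \<and> (\<forall>\<xi>. R (\<xi> + X \<xi>) = \<xi>)"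
proof -
  define G where "G = range (\<lambda>x. (x, X x))"
  have Xh: "cinner (X x) y = cinner x (X y)" for x y by (rule pos_herm[OF XB XP])
  have P: "positive_selfadjoint_graph G" unfolding positive_selfadjoint_graph_def
  proof (intro conjI)
    show "is_graph G" by (auto simp: is_graph_def G_def)
    show "closure (Domain G) = UNIV"
    proof -
      have "Domain G = UNIV" by (auto simp: G_def)
      then show ?thesis by simp
    qed
    show "graph_adjoint G = G"
    proof
      show "graph_adjoint G \<subseteq> G"
      proof clarify
        fix \<eta> \<zeta> assume h: "(\<eta>, \<zeta>) \<in> graph_adjoint G"
        have "cinner x (X \<eta>) = cinner x \<zeta>" for x
          using gadj_memD[OF h, of x "X x"] Xh by (simp add: G_def)
        then have "X \<eta> = \<zeta>" by (rule inner_ext)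
        then show "(\<eta>, \<zeta>) \<in> G" by (auto simp: G_def)
      qed
      show "G \<subseteq> graph_adjoint G"
      proof clarify
        fix a b assume "(a, b) \<in> G"
        then have b: "b = X a" by (auto simp: G_def)
        show "(a, b) \<in> graph_adjoint G" unfolding b
          by (rule gadj_memI) (auto simp: G_def Xh)
      qed
    qed
    show "\<forall>(\<xi>, x)\<in>G. Im (cinner \<xi> x) = 0 \<and> 0 \<le> Re (cinner \<xi> x)"
      using XP by (auto simp: G_def positive_op_def)
  qed
  obtain Y where Y: "bounded_clinear_op Y" "positive_op Y" "\<forall>y. norm (Y y) \<le> norm y"
    "\<forall>y. (Y y, y - Y y) \<in> G" "\<forall>\<xi> x. (\<xi>, x) \<in> G \<longrightarrow> Y (\<xi> + x) = \<xi>"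
    using resolvent[OF P] by blast
  have "Y y + X (Y y) = y" for y
  proof -
    have "(Y y, y - Y y) \<in> G" using Y(4) by blast
    then have "y - Y y = X (Y y)" by (auto simp: G_def)
    then show ?thesis by (simp add: algebra_simps)
  qed
  moreover have "Y (\<xi> + X \<xi>) = \<xi>" for \<xi> using Y(5) by (auto simp: G_def)
  ultimately show ?thesis using Y(1-3) by blast
qed

lemma res_comm:
  assumes UB: "bounded_clinear_op (U::'a::cplx_hilbert \<Rightarrow> 'a)" and UX: "\<And>v. U (X v) = X (U v)"
    and R1: "\<forall>y. R y + X (R y) = y" and R2: "\<forall>\<xi>. R (\<xi> + X \<xi>) = \<xi>"
  shows "U (R y) = R (U y)"
proof -
  have "U y = U (R y + X (R y))" using R1 by simp
  also have "\<dots> = U (R y) + X (U (R y))" by (simp add: bco_add[OF UB] UX)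
  finally have "R (U y) = R (U (R y) + X (U (R y)))" by simp
  also have "\<dots> = U (R y)" using R2 by simp
  finally show ?thesis by simp
qed

context setting begin

lemma i_ii:
  assumes cq: "A \<in> tau_closure_cq_pos D M"
  shows "\<exists>Y\<in>unit_ball_pos M. (\<forall>\<xi>\<in>D. Y \<xi> + A (Y \<xi>) = \<xi>) \<and> (\<forall>\<xi>\<in>D. Y (\<xi> + A \<xi>) = \<xi>)"
proof -
  obtain S where SM: "S \<subseteq> M" and Spos: "\<forall>X\<in>S. positive_op X" and Scomm: "\<forall>X\<in>S. \<forall>Z\<in>S. X \<circ> Z = Z \<circ> X"
    and lim: "tau_s_star_limit_of D S A"
    using cq by (auto simp: tau_closure_cq_pos_def)
  obtain F :: "('h \<Rightarrow> 'h) filter" where F: "F \<noteq> bot" and evS: "eventually (\<lambda>X. X \<in> S) F"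
    and conv0: "\<forall>\<xi>\<in>D. ((\<lambda>X. X \<xi>) \<longlongrightarrow> A \<xi>) F \<and> ((\<lambda>X. adj D X \<xi>) \<longlongrightarrow> adj D A \<xi>) F"
    using lim by (auto simp: tau_s_star_limit_of_def)
  have conv: "((\<lambda>X. X \<xi>) \<longlongrightarrow> A \<xi>) F" if "\<xi> \<in> D" for \<xi> using conv0 that by blast
  have SB: "bounded_clinear_op X" if "X \<in> S" for X using SM that M_bco by blast
  have SP: "positive_op X" if "X \<in> S" for X using Spos that by blast
  have Sh: "cinner (X x) y = cinner x (X y)" if "X \<in> S" for X x y by (rule pos_herm[OF SB[OF that] SP[OF that]])
  have SC: "X (Z v) = Z (X v)" if "X \<in> S" "Z \<in> S" for X Z v
    using Scomm that by (metis comp_apply)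
  define RP where "RP (X::'h \<Rightarrow> 'h) R \<longleftrightarrow> bounded_clinear_op R \<and> positive_op R \<and> (\<forall>y. norm (R y) \<le> norm y)
           \<and> (\<forall>y. R y + X (R y) = y) \<and> (\<forall>\<xi>. R (\<xi> + X \<xi>) = \<xi>)" for X R
  define Rf where "Rf X = (SOME R. RP X R)" for X
  have RfP: "RP X (Rf X)" if "X \<in> S" for X
  proof -
    have "\<exists>R. RP X R" unfolding RP_def by (rule res_bounded[OF SB[OF that] SP[OF that]])
    then show ?thesis unfolding Rf_def by (rule someI_ex)
  qed
  have RB: "bounded_clinear_op (Rf X)" if "X \<in> S" for X using RfP[OF that] by (simp add: RP_def)
  have RPo: "positive_op (Rf X)" if "X \<in> S" for X using RfP[OF that] by (simp add: RP_def)
  have Rn: "norm (Rf X y) \<le> norm y" if "X \<in> S" for X y using RfP[OF that] by (simp add: RP_def)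
  have R1: "\<forall>y. Rf X y + X (Rf X y) = y" if "X \<in> S" for X using RfP[OF that] by (simp add: RP_def)
  have R2: "\<forall>\<xi>. Rf X (\<xi> + X \<xi>) = \<xi>" if "X \<in> S" for X using RfP[OF that] by (simp add: RP_def)
  have ZR: "Z (Rf X y) = Rf X (Z y)" if "X \<in> S" "Z \<in> S" for X Z y
    by (rule res_comm[OF SB[OF that(2)] _ R1[OF that(1)] R2[OF that(1)]]) (rule SC[OF that(2,1)])
  have RR: "Rf X (Rf Z y) = Rf Z (Rf X y)" if "X \<in> S" "Z \<in> S" for X Z y
    by (rule res_comm[OF RB[OF that(1)] _ R1[OF that(2)] R2[OF that(2)]]) (rule ZR[OF that(1,2), symmetric])
  have Rdiff: "Rf X \<eta> - Rf Z \<eta> = Rf X (Rf Z (Z \<eta> - X \<eta>))" if X: "X \<in> S" and Z: "Z \<in> S" for X Z \<eta>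
  proof -
    have a: "Rf X \<eta> = Rf X (Rf Z \<eta>) + Rf X (Rf Z (Z \<eta>))"
    proof -
      have "Rf X \<eta> = Rf X (Rf Z \<eta> + Z (Rf Z \<eta>))" using R1[OF Z] by simp
      also have "\<dots> = Rf X (Rf Z \<eta>) + Rf X (Z (Rf Z \<eta>))" by (rule bco_add[OF RB[OF X]])
      also have "Z (Rf Z \<eta>) = Rf Z (Z \<eta>)" by (rule ZR[OF Z Z])
      finally show ?thesis .
    qed
    have b: "Rf Z \<eta> = Rf X (Rf Z \<eta>) + Rf X (Rf Z (X \<eta>))"
    proof -
      have "Rf Z \<eta> = Rf Z (Rf X \<eta> + X (Rf X \<eta>))" using R1[OF X] by simp
      also have "\<dots> = Rf Z (Rf X \<eta>) + Rf Z (X (Rf X \<eta>))" by (rule bco_add[OF RB[OF Z]])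
      also have "X (Rf X \<eta>) = Rf X (X \<eta>)" by (rule ZR[OF X X])
      finally show ?thesis using RR[OF X Z, of \<eta>] RR[OF X Z, of "X \<eta>"] by simp
    qed
    have "Rf X \<eta> - Rf Z \<eta> = (Rf X (Rf Z \<eta>) + Rf X (Rf Z (Z \<eta>))) - (Rf X (Rf Z \<eta>) + Rf X (Rf Z (X \<eta>)))"
      by (rule arg_cong2[where f=minus, OF a b])
    also have "\<dots> = Rf X (Rf Z (Z \<eta>)) - Rf X (Rf Z (X \<eta>))" by simp
    also have "\<dots> = Rf X (Rf Z (Z \<eta> - X \<eta>))" by (simp add: bco_diff[OF RB[OF X]] bco_diff[OF RB[OF Z]])
    finally show ?thesis .
  qed
  have cauchy: "\<exists>P. eventually P F \<and> (\<forall>X Z. P X \<and> P Z \<longrightarrow> dist (Rf X y) (Rf Z y) < e)" if e: "e > 0" for y e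
  proof -
    have "y \<in> closure D" by (simp add: closure_D)
    then obtain \<eta> where eD: "\<eta> \<in> D" and de: "dist \<eta> y < e / 4" using e unfolding closure_approachable
      by (meson divide_pos_pos zero_less_numeral)
    have ev2: "eventually (\<lambda>X. dist (X \<eta>) (A \<eta>) < e / 4) F" by (rule tendstoD[OF conv[OF eD]]) (use e in simp)
    define P where "P X \<longleftrightarrow> X \<in> S \<and> dist (X \<eta>) (A \<eta>) < e / 4" for X
    have "eventually P F" unfolding P_def using evS ev2 by (rule eventually_conj)
    moreover have "dist (Rf X y) (Rf Z y) < e" if "P X" "P Z" for X Z
    proof -
      have X: "X \<in> S" and Z: "Z \<in> S" and dX: "norm (X \<eta> - A \<eta>) < e / 4" and dZ: "norm (Z \<eta> - A \<eta>) < e / 4"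
        using that by (auto simp: P_def dist_norm)
      have ye: "norm (y - \<eta>) < e / 4" using de by (simp add: dist_norm norm_minus_commute)
      have split: "Rf X y - Rf Z y = Rf X (y - \<eta>) + (Rf X \<eta> - Rf Z \<eta>) + Rf Z (\<eta> - y)"
        by (simp add: bco_diff[OF RB[OF X]] bco_diff[OF RB[OF Z]])
      have n1: "norm (Rf X (y - \<eta>)) < e / 4" using Rn[OF X, of "y - \<eta>"] ye by simp
      have n3: "norm (Rf Z (\<eta> - y)) < e / 4" using Rn[OF Z, of "\<eta> - y"] ye by (simp add: norm_minus_commute)
      have "norm (Rf X \<eta> - Rf Z \<eta>) \<le> norm (Z \<eta> - X \<eta>)"
        unfolding Rdiff[OF X Z] using Rn[OF X] Rn[OF Z] order_trans by blast
      also have "\<dots> \<le> norm (Z \<eta> - A \<eta>) + norm (X \<eta> - A \<eta>)"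
        using norm_triangle_ineq4[of "Z \<eta> - A \<eta>" "X \<eta> - A \<eta>"] by simp
      finally have n2: "norm (Rf X \<eta> - Rf Z \<eta>) < e / 2" using dX dZ by simp
      have "norm (Rf X y - Rf Z y) \<le> norm (Rf X (y - \<eta>)) + norm (Rf X \<eta> - Rf Z \<eta>) + norm (Rf Z (\<eta> - y))"
        unfolding split by (rule order_trans[OF norm_triangle_ineq add_right_mono[OF norm_triangle_ineq]])
      then show ?thesis using n1 n2 n3 by (simp add: dist_norm)
    qed
    ultimately show ?thesis by blast
  qed
  have exlim: "\<exists>c. ((\<lambda>X. Rf X y) \<longlongrightarrow> c) F" for y
  proof -
    have cf: "cauchy_filter (filtermap (\<lambda>X. Rf X y) F)"
      unfolding cauchy_filter_metric_filtermap using cauchy by blast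
    have "\<exists>c. filtermap (\<lambda>X. Rf X y) F \<le> nhds c"
      by (rule cauchy_filter_complete_converges[OF cf complete_UNIV]) (simp_all add: filtermap_bot_iff F)
    then show ?thesis by (simp add: filterlim_def)
  qed
  define Y where "Y y = (SOME c. ((\<lambda>X. Rf X y) \<longlongrightarrow> c) F)" for y
  have YL: "((\<lambda>X. Rf X y) \<longlongrightarrow> Y y) F" for y unfolding Y_def by (rule someI_ex[OF exlim])
  have Yuq: "Y y = c" if "((\<lambda>X. Rf X y) \<longlongrightarrow> c) F" for y c by (rule tendsto_unique[OF F YL that])
  have Yadd: "Y (a + b) = Y a + Y b" for a b
  proof (rule Yuq)
    have l: "((\<lambda>X. Rf X a + Rf X b) \<longlongrightarrow> Y a + Y b) F" by (rule tendsto_add[OF YL YL])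
    have ev: "eventually (\<lambda>X. Rf X a + Rf X b = Rf X (a + b)) F"
      using evS by (rule eventually_mono) (rule bco_add[OF RB, symmetric])
    show "((\<lambda>X. Rf X (a + b)) \<longlongrightarrow> Y a + Y b) F" by (rule tendsto_cong[OF ev, THEN iffD1, OF l])
  qed
  have Ysc: "Y (c *\<^sub>C a) = c *\<^sub>C Y a" for c a
  proof (rule Yuq)
    have "((\<lambda>X. c *\<^sub>C id (Rf X a)) \<longlongrightarrow> c *\<^sub>C id (Y a)) F" by (rule bco_tendsto[OF bco_scal[OF bco_id] YL])
    then have l: "((\<lambda>X. c *\<^sub>C Rf X a) \<longlongrightarrow> c *\<^sub>C Y a) F" by simp
    have ev: "eventually (\<lambda>X. c *\<^sub>C Rf X a = Rf X (c *\<^sub>C a)) F"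
      using evS by (rule eventually_mono) (rule bco_scaleC[OF RB, symmetric])
    show "((\<lambda>X. Rf X (c *\<^sub>C a)) \<longlongrightarrow> c *\<^sub>C Y a) F" by (rule tendsto_cong[OF ev, THEN iffD1, OF l])
  qed
  have Yn: "norm (Y y) \<le> norm y" for y
  proof (rule tendsto_le[OF F tendsto_const tendsto_norm[OF YL]])
    show "eventually (\<lambda>X. norm (Rf X y) \<le> norm y) F" using evS by (rule eventually_mono) (rule Rn)
  qed
  have YB: "bounded_clinear_op Y" by (rule bco_intro[where K=1]) (use Yadd Ysc Yn in auto)
  have YP: "positive_op Y" unfolding positive_op_def
  proof
    fix y
    have l: "((\<lambda>X. cinner y (Rf X y)) \<longlongrightarrow> cinner y (Y y)) F" by (rule tendsto_cinner[OF tendsto_const YL])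
    have li: "((\<lambda>X. Im (cinner y (Rf X y))) \<longlongrightarrow> Im (cinner y (Y y))) F" by (rule tendsto_Im[OF l])
    have evi: "eventually (\<lambda>X. Im (cinner y (Rf X y)) = 0) F"
      using evS by (rule eventually_mono) (use RPo in \<open>simp add: positive_op_def\<close>)
    have "((\<lambda>X. 0::real) \<longlongrightarrow> Im (cinner y (Y y))) F" by (rule tendsto_cong[OF evi, THEN iffD1, OF li])
    then have i: "Im (cinner y (Y y)) = 0" by (rule tendsto_unique[OF F _ tendsto_const])
    have r: "0 \<le> Re (cinner y (Y y))"
    proof (rule tendsto_le[OF F tendsto_Re[OF l] tendsto_const])
      show "eventually (\<lambda>X. 0 \<le> Re (cinner y (Rf X y))) F"
        using evS by (rule eventually_mono) (use RPo in \<open>simp add: positive_op_def\<close>)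
    qed
    show "Im (cinner y (Y y)) = 0 \<and> 0 \<le> Re (cinner y (Y y))" using i r by simp
  qed
  have YM: "Y \<in> M"
  proof (rule MI[OF YB])
    fix U x assume U: "U \<in> C"
    have UB: "bounded_clinear_op U" by (rule C_bco[OF U])
    have l1: "((\<lambda>X. U (Rf X x)) \<longlongrightarrow> U (Y x)) F" by (rule bco_tendsto[OF UB YL])
    have ev1: "eventually (\<lambda>X. U (Rf X x) = Rf X (U x)) F"
      using evS
    proof (rule eventually_mono)
      fix X assume X: "X \<in> S"
      have XM: "X \<in> M" using SM X by blast
      show "U (Rf X x) = Rf X (U x)"
        by (rule res_comm[OF UB _ R1[OF X] R2[OF X]]) (rule M_comm[OF XM U, symmetric])
    qed
    have "((\<lambda>X. Rf X (U x)) \<longlongrightarrow> U (Y x)) F" by (rule tendsto_cong[OF ev1, THEN iffD1, OF l1])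
    then show "Y (U x) = U (Y x)" by (rule Yuq)
  qed
  have Yo: "onorm Y \<le> 1" by (rule onorm_bound) (use Yn in simp_all)
  have Yb: "Y \<in> unit_ball_pos M" using YM YP Yo by (simp add: unit_ball_pos_def)
  have i2: "\<forall>\<xi>\<in>D. Y (\<xi> + A \<xi>) = \<xi>"
  proof
    fix \<xi> assume x: "\<xi> \<in> D"
    have nz: "((\<lambda>X. norm (X \<xi> - A \<xi>)) \<longlongrightarrow> 0) F"
      using tendsto_norm[OF tendsto_diff[OF conv[OF x] tendsto_const[of "A \<xi>"]]] by simp
    have evb: "eventually (\<lambda>X. norm (Rf X (\<xi> + A \<xi>) - \<xi>) \<le> norm (X \<xi> - A \<xi>)) F"
      using evS
    proof (rule eventually_mono)
      fix X assume X: "X \<in> S"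
      have "Rf X (\<xi> + A \<xi>) = Rf X ((\<xi> + X \<xi>) + (A \<xi> - X \<xi>))" by simp
      also have "\<dots> = Rf X (\<xi> + X \<xi>) + Rf X (A \<xi> - X \<xi>)" by (rule bco_add[OF RB[OF X]])
      also have "Rf X (\<xi> + X \<xi>) = \<xi>" by (rule R2[OF X, rule_format])
      finally have "Rf X (\<xi> + A \<xi>) - \<xi> = Rf X (A \<xi> - X \<xi>)" by simp
      then show "norm (Rf X (\<xi> + A \<xi>) - \<xi>) \<le> norm (X \<xi> - A \<xi>)"
        using Rn[OF X, of "A \<xi> - X \<xi>"] by (simp add: norm_minus_commute)
    qed
    have "((\<lambda>X. Rf X (\<xi> + A \<xi>) - \<xi>) \<longlongrightarrow> 0) F" by (rule Lim_null_comparison[OF evb nz])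
    then have "((\<lambda>X. (Rf X (\<xi> + A \<xi>) - \<xi>) + \<xi>) \<longlongrightarrow> 0 + \<xi>) F" by (rule tendsto_add[OF _ tendsto_const])
    then have "((\<lambda>X. Rf X (\<xi> + A \<xi>)) \<longlongrightarrow> \<xi>) F" by simp
    then show "Y (\<xi> + A \<xi>) = \<xi>" by (rule Yuq)
  qed
  have i1: "\<forall>\<xi>\<in>D. Y \<xi> + A (Y \<xi>) = \<xi>"
  proof
    fix \<xi> assume x: "\<xi> \<in> D"
    define w where "w = Y \<xi>"
    have wD: "w \<in> D" using MD YM x by (simp add: w_def)
    have "A w = \<xi> - w"
    proof (rule dense_eq[OF D])
      fix \<eta> assume e: "\<eta> \<in> D"
      have L1: "((\<lambda>X. cinner \<eta> (X w)) \<longlongrightarrow> cinner \<eta> (A w)) F" by (rule tendsto_cinner[OF tendsto_const conv[OF wD]])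
      have E1: "eventually (\<lambda>X. cinner \<eta> (X w) = cinner (X \<eta>) w) F"
        using evS by (rule eventually_mono) (erule Sh[symmetric])
      have L2: "((\<lambda>X. cinner (X \<eta>) w) \<longlongrightarrow> cinner (A \<eta>) w) F" by (rule tendsto_cinner[OF conv[OF e] tendsto_const])
      have L1': "((\<lambda>X. cinner (X \<eta>) w) \<longlongrightarrow> cinner \<eta> (A w)) F" by (rule tendsto_cong[OF E1, THEN iffD1, OF L1])
      have a: "cinner \<eta> (A w) = cinner (A \<eta>) w" by (rule tendsto_unique[OF F L1' L2])
      have L3: "((\<lambda>X. cinner \<eta> (\<xi> - Rf X \<xi>)) \<longlongrightarrow> cinner \<eta> (\<xi> - w)) F"
        unfolding w_def by (rule tendsto_cinner[OF tendsto_const tendsto_diff[OF tendsto_const YL]])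
      have E3: "eventually (\<lambda>X. cinner \<eta> (\<xi> - Rf X \<xi>) = cinner (X \<eta>) (Rf X \<xi>)) F"
        using evS
      proof (rule eventually_mono)
        fix X assume X: "X \<in> S"
        have "\<xi> - Rf X \<xi> = X (Rf X \<xi>)" using R1[OF X] by (simp add: algebra_simps)
        then show "cinner \<eta> (\<xi> - Rf X \<xi>) = cinner (X \<eta>) (Rf X \<xi>)" by (simp add: Sh[OF X])
      qed
      have L4: "((\<lambda>X. cinner (X \<eta>) (Rf X \<xi>)) \<longlongrightarrow> cinner (A \<eta>) w) F"
        unfolding w_def by (rule tendsto_cinner[OF conv[OF e] YL])
      have L3': "((\<lambda>X. cinner (X \<eta>) (Rf X \<xi>)) \<longlongrightarrow> cinner \<eta> (\<xi> - w)) F" by (rule tendsto_cong[OF E3, THEN iffD1, OF L3])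
      have b: "cinner \<eta> (\<xi> - w) = cinner (A \<eta>) w" by (rule tendsto_unique[OF F L3' L4])
      show "cinner \<eta> (A w) = cinner \<eta> (\<xi> - w)" using a b by simp
    qed
    then show "Y \<xi> + A (Y \<xi>) = \<xi>" by (simp add: w_def)
  qed
  show ?thesis using Yb i1 i2 by blast
qed

end



lemma bco_sum: "bounded_clinear_op (T::'a::cplx_hilbert \<Rightarrow> 'a) \<Longrightarrow> T (\<Sum>a\<in>A. f a) = (\<Sum>a\<in>A. T (f a))"
proof (induction A rule: infinite_finite_induct)
  case (infinite A) then show ?case by (simp add: bco_zero)
next
  case empty then show ?case by (simp add: bco_zero)
next
  case (insert a A) then show ?case by (simp add: bco_add)
qed

lemma cinner_sum_right: "cinner x (\<Sum>a\<in>A. f a) = (\<Sum>a\<in>A. cinner (x::'a::cplx_inner) (f a))"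
  by (rule bounded_bilinear.sum_right[OF bounded_bilinear_cinner])

lemma fp_bco:
  assumes TB: "bounded_clinear_op (T::'a::cplx_hilbert \<Rightarrow> 'a)"
  shows "bounded_clinear_op (T ^^ k)"
proof (induction k)
  case 0 then show ?case using bco_id by (simp add: id_def)
next
  case (Suc k) show ?case unfolding funpow.simps(2) by (rule bco_comp[OF TB Suc.IH])
qed

lemma fp_herm:
  assumes H: "\<And>x y. cinner (T x) y = cinner x (T (y::'a::cplx_hilbert))"
  shows "cinner ((T ^^ k) x) y = cinner x ((T ^^ k) y)"
proof (induction k arbitrary: x y)
  case 0 then show ?case by simp
next
  case (Suc k)
  have "cinner ((T ^^ Suc k) x) y = cinner (T ((T ^^ k) x)) y" by simp
  also have "\<dots> = cinner ((T ^^ k) x) (T y)" by (rule H)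
  also have "\<dots> = cinner x ((T ^^ k) (T y))" by (rule Suc)
  also have "(T ^^ k) (T y) = (T ^^ Suc k) y" by (simp add: funpow_swap1)
  finally show ?case .
qed

lemma fp_inner:
  assumes H: "\<And>x y. cinner (T x) y = cinner x (T (y::'a::cplx_hilbert))"
  shows "cinner ((T ^^ n) x) ((T ^^ m) x) = cinner x ((T ^^ (n + m)) x)"
proof -
  have "cinner ((T ^^ n) x) ((T ^^ m) x) = cinner x ((T ^^ n) ((T ^^ m) x))" by (rule fp_herm[OF H])
  also have "(T ^^ n) ((T ^^ m) x) = (T ^^ (n + m)) x" by (simp add: funpow_add)
  finally show ?thesis .
qed

lemma even_odd_cases: fixes k :: nat obtains m where "k = m + m" | m where "k = Suc (m + m)"
proof (induction k arbitrary: thesis)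
  case 0 then show ?case by auto
next
  case (Suc k)
  show ?case
  proof (rule Suc.IH)
    fix m assume "k = m + m" then show thesis using Suc.prems(2)[of m] by simp
  next
    fix m assume "k = Suc (m + m)" then show thesis using Suc.prems(1)[of "Suc m"] by simp
  qed
qed

lemma fp_pos:
  assumes TB: "bounded_clinear_op (T::'a::cplx_hilbert \<Rightarrow> 'a)" and TP: "positive_op T"
  shows "positive_op (T ^^ k)"
  unfolding positive_op_def
proof
  fix x
  have H: "cinner (T a) b = cinner a (T b)" for a b by (rule pos_herm[OF TB TP])
  show "Im (cinner x ((T ^^ k) x)) = 0 \<and> 0 \<le> Re (cinner x ((T ^^ k) x))"
  proof (cases k rule: even_odd_cases)
    case (1 m)
    have "cinner x ((T ^^ k) x) = cinner ((T ^^ m) x) ((T ^^ m) x)" unfolding 1 by (rule fp_inner[OF H, symmetric])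
    then show ?thesis by (simp add: cinner_self)
  next
    case (2 m)
    have "cinner x ((T ^^ k) x) = cinner ((T ^^ m) x) ((T ^^ Suc m) x)" unfolding 2 using fp_inner[OF H, where n=m and m="Suc m" and x=x] by simp
    also have "(T ^^ Suc m) x = T ((T ^^ m) x)" by simp
    finally show ?thesis using TP by (simp add: positive_op_def)
  qed
qed

lemma pow_zero:
  assumes TB: "bounded_clinear_op (T::'a::cplx_hilbert \<Rightarrow> 'a)" and TP: "positive_op T"
    and TN: "\<And>x. norm (T x) \<le> norm x" and fix0: "\<And>z. T z = z \<Longrightarrow> z = 0"
  shows "(\<lambda>n. (T ^^ n) u) \<longlonglongrightarrow> 0"
proof -
  have H: "cinner (T a) b = cinner a (T b)" for a b by (rule pos_herm[OF TB TP])
  define w where "w n = (T ^^ n) u" for n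
  define a where "a k = Re (cinner u ((T ^^ k) u))" for k
  have wi: "cinner (w n) (w m) = cinner u ((T ^^ (n + m)) u)" for n m unfolding w_def by (rule fp_inner[OF H])
  have ae: "a (m + m) = (norm (w m))\<^sup>2" for m
  proof -
    have e: "cinner u ((T ^^ (m + m)) u) = complex_of_real ((norm (w m))\<^sup>2)"
      by (rule trans[OF wi[of m m, symmetric] cinner_self])
    show ?thesis unfolding a_def e by (rule Re_complex_of_real)
  qed
  have wS: "w (Suc m) = T (w m)" for m by (simp add: w_def)
  have ao: "a (Suc (m + m)) = Re (cinner (w m) (T (w m)))" for m
    unfolding a_def using wi[of m "Suc m"] wS[of m] by simp
  have a_nonneg: "a k \<ge> 0" for k
  proof (cases k rule: even_odd_cases)
    case (1 m) then show ?thesis by (simp add: ae)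
  next
    case (2 m) then show ?thesis using TP by (simp add: ao positive_op_def)
  qed
  have a_dec: "a (Suc k) \<le> a k" for k
  proof (cases k rule: even_odd_cases)
    case (1 m)
    have "Re (cinner (w m) (T (w m))) \<le> cmod (cinner (w m) (T (w m)))" by (rule complex_Re_le_cmod)
    also have "\<dots> \<le> norm (w m) * norm (T (w m))" by (rule cauchy_schwarz)
    also have "\<dots> \<le> norm (w m) * norm (w m)" by (rule mult_left_mono[OF TN]) simp
    finally show ?thesis using 1 by (simp add: ao ae power2_eq_square)
  next
    case (2 m)
    have "a (Suc k) = a (Suc m + Suc m)" using 2 by simp
    also have "\<dots> = (norm (T (w m)))\<^sup>2" by (subst ae) (simp add: wS)
    also have "\<dots> \<le> Re (cinner (w m) (T (w m)))" by (rule pc_sq[OF TB TP TN])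
    finally show ?thesis using 2 by (simp add: ao)
  qed
  have "decseq a" unfolding decseq_Suc_iff using a_dec by blast
  then obtain L where aL: "a \<longlonglongrightarrow> L" using decseq_convergent[of a 0] a_nonneg by blast
  have nd: "(norm (w n - w m))\<^sup>2 = a (n + n) - 2 * a (n + m) + a (m + m)" for n m
  proof -
    have r: "Re (cinner (w n) (w m)) = a (n + m)" unfolding a_def wi ..
    show ?thesis unfolding norm_sq_diff r ae[symmetric] ..
  qed
  have "Cauchy w"
  proof (rule metric_CauchyI)
    fix e :: real assume e: "e > 0"
    then have e4: "e\<^sup>2 / 4 > 0" by simp
    obtain N where N: "\<forall>k\<ge>N. norm (a k - L) < e\<^sup>2 / 4" using aL e4 unfolding LIMSEQ_iff by blast
    have "dist (w n) (w m) < e" if "n \<ge> N" "m \<ge> N" for n m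
    proof -
      have "\<bar>a (n + n) - L\<bar> < e\<^sup>2 / 4" "\<bar>a (n + m) - L\<bar> < e\<^sup>2 / 4" "\<bar>a (m + m) - L\<bar> < e\<^sup>2 / 4"
        using N that by auto
      then have "a (n + n) - L < e\<^sup>2 / 4 \<and> - (a (n + n) - L) < e\<^sup>2 / 4"
          "a (n + m) - L < e\<^sup>2 / 4 \<and> - (a (n + m) - L) < e\<^sup>2 / 4"
          "a (m + m) - L < e\<^sup>2 / 4 \<and> - (a (m + m) - L) < e\<^sup>2 / 4"
        by (simp_all only: abs_less_iff)
      then have "(norm (w n - w m))\<^sup>2 < e\<^sup>2" unfolding nd by linarith
      then have "norm (w n - w m) < e" using e by (simp add: power_less_imp_less_base)
      then show ?thesis by (simp add: dist_norm)
    qed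
    then show "\<exists>M. \<forall>m\<ge>M. \<forall>n\<ge>M. dist (w m) (w n) < e" by blast
  qed
  then obtain z where wz: "w \<longlonglongrightarrow> z" using Cauchy_convergent_iff convergent_def by blast
  have l1: "(\<lambda>n. T (w n)) \<longlonglongrightarrow> T z" by (rule bco_tendsto[OF TB wz])
  have l2: "(\<lambda>n. T (w n)) \<longlonglongrightarrow> z" using LIMSEQ_Suc[OF wz] by (simp add: wS)
  have "T z = z" by (rule LIMSEQ_unique[OF l1 l2])
  then have "z = 0" by (rule fix0)
  moreover have "w = (\<lambda>n. (T ^^ n) u)" by (simp add: fun_eq_iff w_def)
  ultimately show ?thesis using wz by simp
qed

lemma comm_fp:
  assumes UB: "bounded_clinear_op (U::'a::cplx_hilbert \<Rightarrow> 'a)" and UT: "\<And>v. U (T v) = T (U v)"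
  shows "U ((T ^^ k) v) = (T ^^ k) (U v)"
proof (induction k)
  case 0 then show ?case by simp
next
  case (Suc k) then show ?case by (simp add: UT)
qed



context setting begin

lemma ii_i:
  assumes Y: "Y \<in> unit_ball_pos M" and i1: "\<forall>\<xi>\<in>D. Y \<xi> + A (Y \<xi>) = \<xi>" and i2: "\<forall>\<xi>\<in>D. Y (\<xi> + A \<xi>) = \<xi>"
  shows "A \<in> tau_closure_cq_pos D M"
proof -
  have YM: "Y \<in> M" and YP: "positive_op Y" and Yo: "onorm Y \<le> 1" using Y by (auto simp: unit_ball_pos_def)
  have YB: "bounded_clinear_op Y" by (rule M_bco[OF YM])
  have Yn: "norm (Y x) \<le> norm x" for x by (rule onorm_bound1[OF YB Yo])
  have Yh: "cinner (Y x) y = cinner x (Y y)" for x y by (rule pos_herm[OF YB YP])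
  have Yinj: "u = 0" if "Y u = 0" for u
  proof (rule dense_orth[OF D])
    fix \<xi> assume x: "\<xi> \<in> D"
    have "cinner \<xi> u = cinner (Y (\<xi> + A \<xi>)) u" using i2 x by simp
    also have "\<dots> = cinner (\<xi> + A \<xi>) (Y u)" by (rule Yh)
    finally show "cinner \<xi> u = 0" using that by simp
  qed
  define T where "T x = x - Y x" for x
  have TM: "T \<in> M"
  proof -
    have "(\<lambda>x. id x + (-1) *\<^sub>C Y x) \<in> M" by (rule M_plus[OF M_id M_scal[OF YM]])
    moreover have "(\<lambda>x. id x + (-1) *\<^sub>C Y x) = T" by (simp add: fun_eq_iff T_def scaleC_minus_one)
    ultimately show ?thesis by simp
  qed
  have TB: "bounded_clinear_op T" by (rule M_bco[OF TM])
  have reb: "Re (cinner x (Y x)) \<le> (norm x)\<^sup>2" for x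
  proof -
    have "Re (cinner x (Y x)) \<le> cmod (cinner x (Y x))" by (rule complex_Re_le_cmod)
    also have "\<dots> \<le> norm x * norm (Y x)" by (rule cauchy_schwarz)
    also have "\<dots> \<le> norm x * norm x" by (rule mult_left_mono[OF Yn]) simp
    finally show ?thesis by (simp add: power2_eq_square)
  qed
  have TP: "positive_op T" unfolding positive_op_def
  proof
    fix x
    have e: "cinner x (T x) = cinner x x - cinner x (Y x)" by (simp add: T_def cinner_diff_right)
    have "Im (cinner x (Y x)) = 0" "0 \<le> Re (cinner x (Y x))" using YP by (auto simp: positive_op_def)
    then show "Im (cinner x (T x)) = 0 \<and> 0 \<le> Re (cinner x (T x))"
      using reb[of x] unfolding e by (simp add: cinner_self)
  qed
  have TN: "norm (T x) \<le> norm x" for x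
  proof -
    have "(norm (T x))\<^sup>2 = (norm x)\<^sup>2 - 2 * Re (cinner x (Y x)) + (norm (Y x))\<^sup>2"
      unfolding T_def by (rule norm_sq_diff)
    moreover have "(norm (Y x))\<^sup>2 \<le> Re (cinner x (Y x))" by (rule pc_sq[OF YB YP Yn])
    moreover have "0 \<le> Re (cinner x (Y x))" using YP by (simp add: positive_op_def)
    ultimately have "(norm (T x))\<^sup>2 \<le> (norm x)\<^sup>2" by linarith
    then show ?thesis by (rule power2_le_imp_le) simp
  qed
  have Tfix: "z = 0" if "T z = z" for z
  proof -
    have "Y z = 0" using that by (simp add: T_def)
    then show ?thesis by (rule Yinj)
  qed
  have TY: "T (Y v) = Y (T v)" for v by (simp add: T_def bco_diff[OF YB])
  have Th: "cinner (T x) y = cinner x (T y)" for x y by (rule pos_herm[OF TB TP])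
  have fpM: "T ^^ k \<in> M" for k
  proof (induction k)
    case 0 then show ?case using M_id by (simp add: id_def)
  next
    case (Suc k) show ?case unfolding funpow.simps(2) by (rule M_comp[OF TM Suc.IH])
  qed
  define X where "X n = (\<lambda>x. \<Sum>k\<in>{1..n}. (T ^^ k) x)" for n
  have XM: "X n \<in> M" for n
  proof (induction n)
    case 0
    have "(\<lambda>x. 0 *\<^sub>C id x) \<in> M" by (rule M_scal[OF M_id])
    moreover have "(\<lambda>x. 0 *\<^sub>C id x) = X 0" by (simp add: X_def fun_eq_iff)
    ultimately show ?case by simp
  next
    case (Suc n)
    have "(\<lambda>x. X n x + (T ^^ Suc n) x) \<in> M" by (rule M_plus[OF Suc.IH fpM])
    moreover have "(\<lambda>x. X n x + (T ^^ Suc n) x) = X (Suc n)" by (simp add: X_def fun_eq_iff)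
    ultimately show ?case by simp
  qed
  have XB: "bounded_clinear_op (X n)" for n by (rule M_bco[OF XM])
  have XP: "positive_op (X n)" for n unfolding positive_op_def
  proof
    fix x
    have e: "cinner x (X n x) = (\<Sum>k\<in>{1..n}. cinner x ((T ^^ k) x))" by (simp add: X_def cinner_sum_right)
    have p: "Im (cinner x ((T ^^ k) x)) = 0 \<and> 0 \<le> Re (cinner x ((T ^^ k) x))" for k
      using fp_pos[OF TB TP, of k] by (simp add: positive_op_def)
    show "Im (cinner x (X n x)) = 0 \<and> 0 \<le> Re (cinner x (X n x))"
      unfolding e using p by (simp add: sum_nonneg)
  qed
  have XT: "X n (T v) = T (X n v)" for n v
  proof -
    have "X n (T v) = (\<Sum>k\<in>{1..n}. T ((T ^^ k) v))" by (simp add: X_def funpow_swap1)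
    also have "\<dots> = T (X n v)" by (simp add: X_def bco_sum[OF TB])
    finally show ?thesis .
  qed
  have Xcomm: "X n \<circ> X m = X m \<circ> X n" for n m
  proof
    fix x
    have "X n (X m x) = (\<Sum>k\<in>{1..n}. (T ^^ k) (X m x))" by (simp add: X_def)
    also have "\<dots> = (\<Sum>k\<in>{1..n}. X m ((T ^^ k) x))" by (simp add: comm_fp[where U="X m" and T=T, OF XB XT])
    also have "\<dots> = X m (\<Sum>k\<in>{1..n}. (T ^^ k) x)" by (rule bco_sum[OF XB, symmetric])
    also have "(\<Sum>k\<in>{1..n}. (T ^^ k) x) = X n x" by (simp add: X_def)
    finally show "(X n \<circ> X m) x = (X m \<circ> X n) x" by simp
  qed
  have tele: "X n (Y u) = T u - (T ^^ Suc n) u" for n u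
  proof (induction n)
    case 0 then show ?case by (simp add: X_def)
  next
    case (Suc n)
    have yu: "Y u = u - T u" by (simp add: T_def)
    have e1: "X (Suc n) (Y u) = X n (Y u) + (T ^^ Suc n) (Y u)" by (simp add: X_def del: funpow.simps)
    have e2: "(T ^^ Suc n) (Y u) = (T ^^ Suc n) u - (T ^^ Suc (Suc n)) u" unfolding yu
      by (simp add: bco_diff[OF fp_bco[OF TB]] del: funpow.simps) (simp only: funpow.simps(2) comp_apply funpow_swap1)
    show ?case unfolding e1 e2 Suc.IH by (simp add: algebra_simps del: funpow.simps)
  qed
  have pz: "(\<lambda>n. (T ^^ n) u) \<longlonglongrightarrow> 0" for u by (rule pow_zero[OF TB TP TN Tfix])
  have conv: "(\<lambda>n. X n \<xi>) \<longlonglongrightarrow> A \<xi>" if x: "\<xi> \<in> D" for \<xi>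
  proof -
    define u where "u = \<xi> + A \<xi>"
    have yu: "Y u = \<xi>" using i2 x by (simp add: u_def)
    have tu: "T u = A \<xi>" unfolding T_def yu by (simp add: u_def)
    have "(\<lambda>n. T u - (T ^^ Suc n) u) \<longlonglongrightarrow> T u - 0" by (rule tendsto_diff[OF tendsto_const LIMSEQ_Suc[OF pz]])
    then show ?thesis using tele[of _ u] by (simp add: yu tu)
  qed
  have adjA: "adj D A \<xi> = A \<xi>" if x: "\<xi> \<in> D" for \<xi>
  proof (rule adj_eqI[OF D], intro ballI)
    fix \<eta> assume e: "\<eta> \<in> D"
    define a where "a = \<eta> + A \<eta>"
    define u where "u = \<xi> + A \<xi>"
    have ya: "Y a = \<eta>" using i2 e by (simp add: a_def)
    have ta: "T a = A \<eta>" unfolding T_def ya by (simp add: a_def)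
    have yu: "Y u = \<xi>" using i2 x by (simp add: u_def)
    have tu: "T u = A \<xi>" unfolding T_def yu by (simp add: u_def)
    have "cinner (T a) (Y u) = cinner a (T (Y u))" by (rule Th)
    also have "\<dots> = cinner a (Y (T u))" by (simp add: TY)
    also have "\<dots> = cinner (Y a) (T u)" by (simp add: Yh)
    finally show "cinner (A \<eta>) \<xi> = cinner \<eta> (A \<xi>)" using ya ta yu tu by simp
  qed
  have adjX: "adj D (X n) \<xi> = X n \<xi>" for n \<xi> by (rule adj_herm[OF D XB pos_herm[OF XB XP]])
  show ?thesis unfolding tau_closure_cq_pos_def mem_Collect_eq
  proof (intro exI[of _ "range X"] conjI)
    show "range X \<subseteq> M" using XM by blast
    show "\<forall>Z\<in>range X. positive_op Z" using XP by blast
    show "\<forall>Z\<in>range X. \<forall>W\<in>range X. Z \<circ> W = W \<circ> Z" using Xcomm by blast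
    show "tau_s_star_limit_of D (range X) A" unfolding tau_s_star_limit_of_def
    proof (intro conjI exI[of _ "filtermap X sequentially"])
      show "A \<in> Ldag D" by (rule A_Ldag)
      show "filtermap X sequentially \<noteq> bot" by (rule filtermap_sequentually_ne_bot)
      show "eventually (\<lambda>Z. Z \<in> range X) (filtermap X sequentially)" by (simp add: eventually_filtermap)
      show "\<forall>\<xi>\<in>D. ((\<lambda>Z. Z \<xi>) \<longlongrightarrow> A \<xi>) (filtermap X sequentially) \<and>
          ((\<lambda>Z. adj D Z \<xi>) \<longlongrightarrow> adj D A \<xi>) (filtermap X sequentially)"
        using conv adjA by (simp add: filterlim_filtermap adjX)
    qed
  qed
qed

end

theorem corollary4p4:
  fixes D :: "'h::cplx_hilbert set" and M0 :: "('h \<Rightarrow> 'h) set" and A :: "'h \<Rightarrow> 'h"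
  assumes "dense_subspace D"
    and "unital_cstar_algebra M0"
    and "\<forall>X\<in>M0. \<forall>\<xi>\<in>D. X \<xi> \<in> D"
    and "A \<in> tau_closure D (bicommutant M0)"
    and "\<forall>X\<in>bicommutant M0. \<forall>\<xi>\<in>D. X \<xi> \<in> D"
  shows "(A \<in> tau_closure_cq_pos D (bicommutant M0)
          \<longleftrightarrow> (\<exists>Y\<in>unit_ball_pos (bicommutant M0).
                 (\<forall>\<xi>\<in>D. Y \<xi> + A (Y \<xi>) = \<xi>) \<and> (\<forall>\<xi>\<in>D. Y (\<xi> + A \<xi>) = \<xi>)))
       \<and> ((\<exists>Y\<in>unit_ball_pos (bicommutant M0).
                 (\<forall>\<xi>\<in>D. Y \<xi> + A (Y \<xi>) = \<xi>) \<and> (\<forall>\<xi>\<in>D. Y (\<xi> + A \<xi>) = \<xi>))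
          \<longleftrightarrow> positive_selfadjoint_graph (op_closure_graph D A))"
proof -
  interpret setting D M0 A using assms by unfold_locales
  let ?ii = "\<exists>Y\<in>unit_ball_pos (bicommutant M0).
                 (\<forall>\<xi>\<in>D. Y \<xi> + A (Y \<xi>) = \<xi>) \<and> (\<forall>\<xi>\<in>D. Y (\<xi> + A \<xi>) = \<xi>)"
  have a: "A \<in> tau_closure_cq_pos D (bicommutant M0) \<Longrightarrow> ?ii" by (rule i_ii)
  have b: "?ii \<Longrightarrow> A \<in> tau_closure_cq_pos D (bicommutant M0)"
  proof -
    assume ?ii
    then obtain Y where "Y \<in> unit_ball_pos (bicommutant M0)" "\<forall>\<xi>\<in>D. Y \<xi> + A (Y \<xi>) = \<xi>" "\<forall>\<xi>\<in>D. Y (\<xi> + A \<xi>) = \<xi>"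
      by blast
    then show ?thesis by (rule ii_i)
  qed
  have c: "?ii \<Longrightarrow> positive_selfadjoint_graph (op_closure_graph D A)"
  proof -
    assume ?ii
    then obtain Y where "Y \<in> unit_ball_pos (bicommutant M0)" "\<forall>\<xi>\<in>D. Y \<xi> + A (Y \<xi>) = \<xi>" "\<forall>\<xi>\<in>D. Y (\<xi> + A \<xi>) = \<xi>"
      by blast
    then show ?thesis by (rule ii_iii)
  qed
  have d: "positive_selfadjoint_graph (op_closure_graph D A) \<Longrightarrow> ?ii" by (rule iii_ii)
  show ?thesis using a b c d by blast
qed



end
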